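(* Let $\mathcal{X}$ be a countably generated operator $*$-correspondence from $\mathcal{A}$ to $\mathcal{B}$. Then there exists a sequence $\{\xi_n\}$ in $\mathcal{X}$ such that (1) $\{\xi_n b: b\in\mathcal{B},\ n\in\mathbb{N}\}$ spans a norm-dense subspace of the $C^*$-completion $X$; (2) the sequence of finite rows $\sum_{n=1}^N\xi_ne_{1n}$ is Cauchy in $\ell^2(\mathbb{N},\mathcal{X})^t$. Furthermore, $X$ is differentiable from $\mathcal{A}$ to $\mathcal{B}$, and for any sequence $\{\xi_n\}$ satisfying (1) and (2), $\{\iota(\xi_n)\}$ is a differentiable generating sequence (with $\iota:\mathcal{X}\to X$ the inclusion).
   Context: Operator $*$-algebras and operator $*$-correspondences: $\mathcal{A},\mathcal{B}$ are operator spaces and Banach $*$-algebras with completely contractive multiplication and $\|x^*\|=\|x\|$ at all matrix levels, each with a fixed $C^*$-norm, $\sigma$-unital completion $A$, $B$ and completely bounded inclusion. $\mathcal{X}$ is an operator $\mathcal{A}$-$\mathcal{B}$-bimodule (completely contractive actions) with a pairing into $\mathcal{B}$, right $\mathcal{B}$-linear, hermitian, $\langle\xi,a\eta\rangle=\langle a^*\xi,\eta\rangle$, $\|\langle\xi,\eta\rangle\|\le\|\xi\|\|\eta\|$ on matrices ($\langle\xi,\eta\rangle_{ij}=\sum_k\langle\xi_{ki},\eta_{kj}\rangle$), positive and definite in $B$, with $\|\langle a\xi,a\xi\rangle\|_\infty\le\|a\|_\infty^2\|\langle\xi,\xi\rangle\|_\infty$; $X$ is the completion in $\|\langle\xi,\xi\rangle\|_\infty^{1/2}$.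 Countably generated: there is a sequence $(\eta_n)$ in $X$ with $\mathrm{span}\{\eta_nb:b\in\mathcal{B}\}$ dense in $X$. Row correspondence $\ell^2(\mathbb{N},\mathcal{X})^t$: completion of finitely supported rows $\sum_n x_ne_{1n}$, where a finite row $(x_1,\dots,x_N)$ has norm equal to the $M_N(\mathcal{X})$-norm of the matrix with that first row and zeros elsewhere. $K_{\mathcal{B}}$: completion of finitely supported infinite matrices over $\mathcal{B}$ in the norm $\sup_n\|\pi_n(\cdot)\|$, $\pi_n$ truncation to the $n\times n$ corner, with matrix norms defined the same way. A $C^*$-correspondence $X$ from $A$ to $B$ is differentiable from $\mathcal{A}$ to $\mathcal{B}$ if there is a sequence $\{\xi_n\}$ in $X$ (a differentiable generating sequence) such that: $\mathrm{span}\{\xi_nb:b\in B\}$ is dense in $X$; $\langle\xi_n,(a+\lambda)\xi_m\rangle\in\mathcal{B}$ for $a\in\mathcal{A},\lambda\in\mathbb{C}$; the finite matrices $\sum_{n,m\le N}\langle\xi_n,(a+\lambda)\xi_m\rangle e_{nm}$ form a Cauchy sequence in $K_{\mathcal{B}}$; and $\tau:\mathcal{A}\to K_{\mathcal{B}}$, $a\mapsto\sum_{n,m}\langle\xi_n,a\xi_m\rangle e_{nm}$, is completely bounded. *)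

theory Defs
  imports "HOL-Analysis.Analysis"
begin

section \<open>Matrices (0-indexed, n x n matrices as functions nat => nat => 'v)\<close>

definition matin :: "'v set \<Rightarrow> nat \<Rightarrow> (nat \<Rightarrow> nat \<Rightarrow> 'v) \<Rightarrow> bool" where
  "matin V n x \<longleftrightarrow> (\<forall>i<n. \<forall>j<n. x i j \<in> V)"

definition cmatnorm :: "nat \<Rightarrow> nat \<Rightarrow> (nat \<Rightarrow> nat \<Rightarrow> complex) \<Rightarrow> real" where
  "cmatnorm n m \<alpha> = Sup {sqrt (\<Sum>i<n. (cmod (\<Sum>j<m. \<alpha> i j * v j))\<^sup>2) | v.
                          (\<Sum>j<m. (cmod (v j))\<^sup>2) \<le> 1}"

text \<open>alpha x beta for alpha n x m, x m x m, beta m x n scalar matrices.\<close>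
definition smul :: "(complex \<Rightarrow> 'v \<Rightarrow> 'v) \<Rightarrow> nat \<Rightarrow> (nat \<Rightarrow> nat \<Rightarrow> complex)
    \<Rightarrow> (nat \<Rightarrow> nat \<Rightarrow> 'v::comm_monoid_add) \<Rightarrow> (nat \<Rightarrow> nat \<Rightarrow> complex) \<Rightarrow> nat \<Rightarrow> nat \<Rightarrow> 'v" where
  "smul sc m \<alpha> x \<beta> = (\<lambda>i j. \<Sum>k<m. \<Sum>l<m. sc (\<alpha> i k * \<beta> l j) (x k l))"

definition dsum :: "nat \<Rightarrow> (nat \<Rightarrow> nat \<Rightarrow> 'v::zero) \<Rightarrow> (nat \<Rightarrow> nat \<Rightarrow> 'v) \<Rightarrow> nat \<Rightarrow> nat \<Rightarrow> 'v" where
  "dsum n x y = (\<lambda>i j. if i < n \<and> j < n then x i j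
                       else if n \<le> i \<and> n \<le> j then y (i - n) (j - n) else 0)"

definition mprod :: "nat \<Rightarrow> (nat \<Rightarrow> nat \<Rightarrow> 'a::semiring_0) \<Rightarrow> (nat \<Rightarrow> nat \<Rightarrow> 'a) \<Rightarrow> nat \<Rightarrow> nat \<Rightarrow> 'a" where
  "mprod n x y = (\<lambda>i j. \<Sum>k<n. x i k * y k j)"

text \<open>Block matrix in M_{kn} from a k x k matrix of n x n matrices: entry (p*n+i, q*n+j) = F p q i j.\<close>
definition blk :: "nat \<Rightarrow> nat \<Rightarrow> (nat \<Rightarrow> nat \<Rightarrow> nat \<Rightarrow> nat \<Rightarrow> 'v::zero) \<Rightarrow> nat \<Rightarrow> nat \<Rightarrow> 'v" where
  "blk k n F = (\<lambda>r s. if r < k * n \<and> s < k * n then F (r div n) (s div n) (r mod n) (s mod n) else 0)"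

definition cspan :: "(complex \<Rightarrow> 'v \<Rightarrow> 'v) \<Rightarrow> 'v set \<Rightarrow> 'v::comm_monoid_add set" where
  "cspan sc S = {x. \<exists>F c. finite F \<and> F \<subseteq> S \<and> x = (\<Sum>s\<in>F. sc (c s) s)}"

section \<open>Operator spaces (Ruan's axioms) on a subspace V of an ambient complex vector space\<close>

definition operator_space ::
  "(complex \<Rightarrow> 'v::ab_group_add \<Rightarrow> 'v) \<Rightarrow> 'v set \<Rightarrow> (nat \<Rightarrow> (nat \<Rightarrow> nat \<Rightarrow> 'v) \<Rightarrow> real) \<Rightarrow> bool" where
  "operator_space sc V mn \<longleftrightarrow>
     0 \<in> V \<and> (\<forall>x\<in>V. \<forall>y\<in>V. x + y \<in> V) \<and> (\<forall>c. \<forall>x\<in>V. sc c x \<in> V) \<and>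
     (\<forall>n x y. (\<forall>i<n. \<forall>j<n. x i j = y i j) \<longrightarrow> mn n x = mn n y) \<and>
     (\<forall>n\<ge>1. \<forall>x. matin V n x \<longrightarrow>
        0 \<le> mn n x \<and> (mn n x = 0 \<longleftrightarrow> (\<forall>i<n. \<forall>j<n. x i j = 0)) \<and>
        (\<forall>c. mn n (\<lambda>i j. sc c (x i j)) = cmod c * mn n x) \<and>
        (\<forall>y. matin V n y \<longrightarrow> mn n (\<lambda>i j. x i j + y i j) \<le> mn n x + mn n y)) \<and>
     (\<forall>n\<ge>1. \<forall>m\<ge>1. \<forall>x \<alpha> \<beta>. matin V m x \<longrightarrow>
        mn n (smul sc m \<alpha> x \<beta>) \<le> cmatnorm n m \<alpha> * mn m x * cmatnorm m n \<beta>) \<and>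
     (\<forall>n\<ge>1. \<forall>m\<ge>1. \<forall>x y. matin V n x \<longrightarrow> matin V m y \<longrightarrow>
        mn (n + m) (dsum n x y) = max (mn n x) (mn m y))"

definition cstar_algebra :: "(complex \<Rightarrow> 'a::{real_normed_algebra,banach} \<Rightarrow> 'a) \<Rightarrow> ('a \<Rightarrow> 'a) \<Rightarrow> bool" where
  "cstar_algebra sc st \<longleftrightarrow>
     (\<forall>r x. sc (complex_of_real r) x = r *\<^sub>R x) \<and>
     (\<forall>c d x. sc (c + d) x = sc c x + sc d x) \<and>
     (\<forall>c x y. sc c (x + y) = sc c x + sc c y) \<and>
     (\<forall>c d x. sc c (sc d x) = sc (c * d) x) \<and>
     (\<forall>c x y. sc c (x * y) = sc c x * y \<and> sc c (x * y) = x * sc c y) \<and>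
     (\<forall>c x. norm (sc c x) = cmod c * norm x) \<and>
     (\<forall>x y. st (x + y) = st x + st y) \<and>
     (\<forall>c x. st (sc c x) = sc (cnj c) (st x)) \<and>
     (\<forall>x y. st (x * y) = st y * st x) \<and>
     (\<forall>x. st (st x) = x) \<and>
     (\<forall>x. norm (st x * x) = (norm x)\<^sup>2)"

definition positive :: "('a::times \<Rightarrow> 'a) \<Rightarrow> 'a \<Rightarrow> bool" where
  "positive st x \<longleftrightarrow> (\<exists>y. x = st y * y)"

definition sigma_unital :: "('a::{real_normed_algebra,banach} \<Rightarrow> 'a) \<Rightarrow> bool" where
  "sigma_unital st \<longleftrightarrow> (\<exists>e::nat \<Rightarrow> 'a.
     (\<forall>n. positive st (e n) \<and> norm (e n) \<le> 1 \<and> positive st (e (Suc n) - e n)) \<and>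
     (\<forall>a. (\<lambda>n. e n * a) \<longlonglongrightarrow> a \<and> (\<lambda>n. a * e n) \<longlonglongrightarrow> a))"

text \<open>The C*-norm on M_n(A), via the faithful action of M_n(A) on the Hilbert module A^n.\<close>
definition cmatn :: "('a::{real_normed_algebra,banach} \<Rightarrow> 'a) \<Rightarrow> nat \<Rightarrow> (nat \<Rightarrow> nat \<Rightarrow> 'a) \<Rightarrow> real" where
  "cmatn st n x = Sup {norm (\<Sum>i<n. \<Sum>j<n. st (u i) * x i j * v j) | u v.
        norm (\<Sum>i<n. st (u i) * u i) \<le> 1 \<and> norm (\<Sum>j<n. st (v j) * v j) \<le> 1}"

section \<open>Operator *-algebras sitting densely inside their C*-completion\<close>

record 'a opalg =
  asc :: "complex \<Rightarrow> 'a \<Rightarrow> 'a"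
  ast :: "'a \<Rightarrow> 'a"
  acar :: "'a set"
  amn :: "nat \<Rightarrow> (nat \<Rightarrow> nat \<Rightarrow> 'a) \<Rightarrow> real"

definition lev1 :: "(nat \<Rightarrow> (nat \<Rightarrow> nat \<Rightarrow> 'v) \<Rightarrow> real) \<Rightarrow> 'v \<Rightarrow> real" where
  "lev1 mn x = mn 1 (\<lambda>_ _. x)"

definition op_star_algebra :: "'a::{real_normed_algebra,banach} opalg \<Rightarrow> bool" where
  "op_star_algebra \<A> \<longleftrightarrow>
     cstar_algebra (asc \<A>) (ast \<A>) \<and> sigma_unital (ast \<A>) \<and>
     operator_space (asc \<A>) (acar \<A>) (amn \<A>) \<and>
     closure (acar \<A>) = UNIV \<and>
     (\<forall>x\<in>acar \<A>. \<forall>y\<in>acar \<A>. x * y \<in> acar \<A>) \<and>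
     (\<forall>x\<in>acar \<A>. ast \<A> x \<in> acar \<A>) \<and>
     \<comment> \<open>Banach: complete in the level-1 operator space norm\<close>
     (\<forall>f::nat \<Rightarrow> 'a. (\<forall>k. f k \<in> acar \<A>) \<and>
          (\<forall>\<epsilon>::real>0. \<exists>N::nat. \<forall>p\<ge>N. \<forall>q\<ge>N. lev1 (amn \<A>) (f p - f q) < \<epsilon>) \<longrightarrow>
          (\<exists>x\<in>acar \<A>. \<forall>\<epsilon>::real>0. \<exists>N::nat. \<forall>p\<ge>N. lev1 (amn \<A>) (f p - x) < \<epsilon>)) \<and>
     \<comment> \<open>completely contractive multiplication\<close>
     (\<forall>n\<ge>1. \<forall>x y. matin (acar \<A>) n x \<longrightarrow> matin (acar \<A>) n y \<longrightarrow>
        amn \<A> n (mprod n x y) \<le> amn \<A> n x * amn \<A> n y) \<and>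
     \<comment> \<open>isometric involution at all matrix levels\<close>
     (\<forall>n\<ge>1. \<forall>x. matin (acar \<A>) n x \<longrightarrow> amn \<A> n (\<lambda>i j. ast \<A> (x j i)) = amn \<A> n x) \<and>
     \<comment> \<open>completely bounded inclusion into the C*-completion\<close>
     (\<exists>C::real. \<forall>n::nat\<ge>1. \<forall>x. matin (acar \<A>) n x \<longrightarrow> cmatn (ast \<A>) n x \<le> C * amn \<A> n x)"

record ('a, 'b, 'x) opcorr =
  xsc :: "complex \<Rightarrow> 'x \<Rightarrow> 'x"
  lact :: "'a \<Rightarrow> 'x \<Rightarrow> 'x"
  ract :: "'x \<Rightarrow> 'b \<Rightarrow> 'x"
  ipr :: "'x \<Rightarrow> 'x \<Rightarrow> 'b"
  xcar :: "'x set"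
  xmn :: "nat \<Rightarrow> (nat \<Rightarrow> nat \<Rightarrow> 'x) \<Rightarrow> real"

text \<open>The ambient type 'x is the C*-correspondence X from A to B (with norm ||<x,x>||^(1/2)).\<close>
definition cstar_corr ::
  "'a::{real_normed_algebra,banach} opalg \<Rightarrow> 'b::{real_normed_algebra,banach} opalg
   \<Rightarrow> ('a, 'b, 'x::{real_normed_vector,banach}) opcorr \<Rightarrow> bool" where
  "cstar_corr \<A> \<B> \<X> \<longleftrightarrow>
     (\<forall>r x. xsc \<X> (complex_of_real r) x = r *\<^sub>R x) \<and>
     (\<forall>c d x. xsc \<X> (c + d) x = xsc \<X> c x + xsc \<X> d x) \<and>
     (\<forall>c x y. xsc \<X> c (x + y) = xsc \<X> c x + xsc \<X> c y) \<and>
     (\<forall>c d x. xsc \<X> c (xsc \<X> d x) = xsc \<X> (c * d) x) \<and>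
     \<comment> \<open>right Hilbert B-module\<close>
     (\<forall>x y b. ract \<X> (x + y) b = ract \<X> x b + ract \<X> y b) \<and>
     (\<forall>x b b'. ract \<X> x (b + b') = ract \<X> x b + ract \<X> x b') \<and>
     (\<forall>x b b'. ract \<X> x (b * b') = ract \<X> (ract \<X> x b) b') \<and>
     (\<forall>c x b. ract \<X> (xsc \<X> c x) b = xsc \<X> c (ract \<X> x b) \<and>
              ract \<X> x (asc \<B> c b) = xsc \<X> c (ract \<X> x b)) \<and>
     (\<forall>x y z. ipr \<X> x (y + z) = ipr \<X> x y + ipr \<X> x z) \<and>
     (\<forall>c x y. ipr \<X> x (xsc \<X> c y) = asc \<B> c (ipr \<X> x y)) \<and>
     (\<forall>x y b. ipr \<X> x (ract \<X> y b) = ipr \<X> x y * b) \<and>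
     (\<forall>x y. ipr \<X> y x = ast \<B> (ipr \<X> x y)) \<and>
     (\<forall>x. positive (ast \<B>) (ipr \<X> x x)) \<and>
     (\<forall>x. ipr \<X> x x = 0 \<longrightarrow> x = 0) \<and>
     (\<forall>x. norm x = sqrt (norm (ipr \<X> x x))) \<and>
     \<comment> \<open>left action of A by adjointable operators (a *-homomorphism A -> L(X))\<close>
     (\<forall>a x y. lact \<X> a (x + y) = lact \<X> a x + lact \<X> a y) \<and>
     (\<forall>a a' x. lact \<X> (a + a') x = lact \<X> a x + lact \<X> a' x) \<and>
     (\<forall>c a x. lact \<X> (asc \<A> c a) x = xsc \<X> c (lact \<X> a x) \<and>
              lact \<X> a (xsc \<X> c x) = xsc \<X> c (lact \<X> a x)) \<and>
     (\<forall>a a' x. lact \<X> (a * a') x = lact \<X> a (lact \<X> a' x)) \<and>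
     (\<forall>a x b. lact \<X> a (ract \<X> x b) = ract \<X> (lact \<X> a x) b) \<and>
     (\<forall>a x y. ipr \<X> x (lact \<X> a y) = ipr \<X> (lact \<X> (ast \<A> a) x) y)"

text \<open>Operator *-correspondence: the dense subset xcar (= the operator space \<X>) of X.\<close>
definition op_star_corr ::
  "'a::{real_normed_algebra,banach} opalg \<Rightarrow> 'b::{real_normed_algebra,banach} opalg
   \<Rightarrow> ('a, 'b, 'x::{real_normed_vector,banach}) opcorr \<Rightarrow> bool" where
  "op_star_corr \<A> \<B> \<X> \<longleftrightarrow>
     op_star_algebra \<A> \<and> op_star_algebra \<B> \<and> cstar_corr \<A> \<B> \<X> \<and>
     operator_space (xsc \<X>) (xcar \<X>) (xmn \<X>) \<and>
     closure (xcar \<X>) = UNIV \<and>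
     (\<forall>a\<in>acar \<A>. \<forall>x\<in>xcar \<X>. lact \<X> a x \<in> xcar \<X>) \<and>
     (\<forall>x\<in>xcar \<X>. \<forall>b\<in>acar \<B>. ract \<X> x b \<in> xcar \<X>) \<and>
     (\<forall>x\<in>xcar \<X>. \<forall>y\<in>xcar \<X>. ipr \<X> x y \<in> acar \<B>) \<and>
     \<comment> \<open>completely contractive actions\<close>
     (\<forall>n\<ge>1. \<forall>a x. matin (acar \<A>) n a \<longrightarrow> matin (xcar \<X>) n x \<longrightarrow>
        xmn \<X> n (\<lambda>i j. \<Sum>k<n. lact \<X> (a i k) (x k j)) \<le> amn \<A> n a * xmn \<X> n x) \<and>
     (\<forall>n\<ge>1. \<forall>x b. matin (xcar \<X>) n x \<longrightarrow> matin (acar \<B>) n b \<longrightarrow>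
        xmn \<X> n (\<lambda>i j. \<Sum>k<n. ract \<X> (x i k) (b k j)) \<le> xmn \<X> n x * amn \<B> n b) \<and>
     \<comment> \<open>matrix contractivity of the pairing\<close>
     (\<forall>n\<ge>1. \<forall>x y. matin (xcar \<X>) n x \<longrightarrow> matin (xcar \<X>) n y \<longrightarrow>
        amn \<B> n (\<lambda>i j. \<Sum>k<n. ipr \<X> (x k i) (y k j)) \<le> xmn \<X> n x * xmn \<X> n y) \<and>
     (\<forall>a\<in>acar \<A>. \<forall>x\<in>xcar \<X>.
        norm (ipr \<X> (lact \<X> a x) (lact \<X> a x)) \<le> (norm a)\<^sup>2 * norm (ipr \<X> x x))"

definition countably_generated :: "'b opalg \<Rightarrow> ('a, 'b, 'x::{real_normed_vector}) opcorr \<Rightarrow> bool" where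
  "countably_generated \<B> \<X> \<longleftrightarrow>
     (\<exists>\<eta>::nat \<Rightarrow> 'x. closure (cspan (xsc \<X>) {ract \<X> (\<eta> n) b | n b. b \<in> acar \<B>}) = UNIV)"

text \<open>The finite rows sum_{n<N} xi_n e_{1n} form a Cauchy sequence in l^2(N,\<X>)^t.\<close>
definition row_cauchy :: "('a, 'b, 'x::ab_group_add) opcorr \<Rightarrow> (nat \<Rightarrow> 'x) \<Rightarrow> bool" where
  "row_cauchy \<X> \<xi> \<longleftrightarrow> (\<forall>\<epsilon>>0. \<exists>N0. \<forall>N\<ge>N0. \<forall>N'\<ge>N0.
      xmn \<X> (Suc (max N N'))
        (\<lambda>i j. if i = 0 then (if j < N then \<xi> j else 0) - (if j < N' then \<xi> j else 0) else 0) < \<epsilon>)"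

text \<open>Norm on K_B: sup over n of the M_n(\<B>)-norm of the n x n corner; Cauchy condition for
  the finite matrices sum_{n,m<N} c n m e_{nm}.\<close>
definition KB_cauchy :: "'b::ab_group_add opalg \<Rightarrow> (nat \<Rightarrow> nat \<Rightarrow> 'b) \<Rightarrow> bool" where
  "KB_cauchy \<B> c \<longleftrightarrow> (\<forall>\<epsilon>>0. \<exists>N0. \<forall>N\<ge>N0. \<forall>N'\<ge>N0. \<forall>n\<ge>1.
      amn \<B> n (\<lambda>i j. (if i < N \<and> j < N then c i j else 0) - (if i < N' \<and> j < N' then c i j else 0)) \<le> \<epsilon>)"

definition diff_gen_seq ::
  "'a::{real_normed_algebra,banach} opalg \<Rightarrow> 'b::{real_normed_algebra,banach} opalg
   \<Rightarrow> ('a, 'b, 'x::{real_normed_vector,banach}) opcorr \<Rightarrow> (nat \<Rightarrow> 'x) \<Rightarrow> bool" where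
  "diff_gen_seq \<A> \<B> \<X> \<xi> \<longleftrightarrow>
     closure (cspan (xsc \<X>) {ract \<X> (\<xi> n) b | n b. True}) = UNIV \<and>
     (\<forall>a\<in>acar \<A>. \<forall>l n m. ipr \<X> (\<xi> n) (lact \<X> a (\<xi> m) + xsc \<X> l (\<xi> m)) \<in> acar \<B>) \<and>
     (\<forall>a\<in>acar \<A>. \<forall>l. KB_cauchy \<B> (\<lambda>n m. ipr \<X> (\<xi> n) (lact \<X> a (\<xi> m) + xsc \<X> l (\<xi> m)))) \<and>
     \<comment> \<open>tau : \<A> -> K_B completely bounded; the M_k(K_B) norm of tau_k(a) is the sup over n of the
         M_{kn}(\<B>)-norms of its n x n corners\<close>
     (\<exists>C. \<forall>k\<ge>1. \<forall>a. matin (acar \<A>) k a \<longrightarrow> (\<forall>n\<ge>1.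
        amn \<B> (k * n) (blk k n (\<lambda>p q i j. ipr \<X> (\<xi> i) (lact \<X> (a p q) (\<xi> j)))) \<le> C * amn \<A> k a))"

definition differentiable_corr ::
  "'a::{real_normed_algebra,banach} opalg \<Rightarrow> 'b::{real_normed_algebra,banach} opalg
   \<Rightarrow> ('a, 'b, 'x::{real_normed_vector,banach}) opcorr \<Rightarrow> bool" where
  "differentiable_corr \<A> \<B> \<X> \<longleftrightarrow> (\<exists>\<xi>. diff_gen_seq \<A> \<B> \<X> \<xi>)"

end

theory Submission
  imports Defs "HOL-Analysis.Analysis"
begin


lemma sum_single:
  assumes "finite A" "a \<in> A" "\<And>x. x \<in> A \<Longrightarrow> x \<noteq> a \<Longrightarrow> f x = 0"
  shows "sum f A = f a"
proof -
  have "sum f A = sum f {a}"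
    by (rule sum.mono_neutral_right) (use assms in auto)
  thus ?thesis by simp
qed

definition ppm :: "nat \<Rightarrow> nat \<Rightarrow> (nat \<Rightarrow> nat \<Rightarrow> complex) \<Rightarrow> bool" where
  "ppm n m \<alpha> \<longleftrightarrow> (\<forall>i<n. \<forall>k<m. \<alpha> i k = 0 \<or> \<alpha> i k = 1) \<and>
     (\<forall>i<n. \<forall>k<m. \<forall>k'<m. \<alpha> i k = 1 \<longrightarrow> \<alpha> i k' = 1 \<longrightarrow> k = k') \<and>
     (\<forall>i<n. \<forall>i'<n. \<forall>k<m. \<alpha> i k = 1 \<longrightarrow> \<alpha> i' k = 1 \<longrightarrow> i = i')"

lemma ppm_sumsq:
  assumes "ppm n m \<alpha>"
  shows "(\<Sum>i<n. (cmod (\<Sum>j<m. \<alpha> i j * v j))\<^sup>2) \<le> (\<Sum>j<m. (cmod (v j))\<^sup>2)"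
proof -
  have row: "(cmod (\<Sum>j<m. \<alpha> i j * v j))\<^sup>2 = (\<Sum>j<m. Re (\<alpha> i j) * (cmod (v j))\<^sup>2)" if i: "i < n" for i
  proof (cases "\<exists>k<m. \<alpha> i k = 1")
    case True
    then obtain k where k: "k < m" "\<alpha> i k = 1" by blast
    have z: "\<alpha> i j = 0" if "j < m" "j \<noteq> k" for j
      using assms i k that unfolding ppm_def by metis
    have "(\<Sum>j<m. \<alpha> i j * v j) = \<alpha> i k * v k"
      by (rule sum_single) (use k z in auto)
    moreover have "(\<Sum>j<m. Re (\<alpha> i j) * (cmod (v j))\<^sup>2) = Re (\<alpha> i k) * (cmod (v k))\<^sup>2"
      by (rule sum_single) (use k z in auto)
    ultimately show ?thesis using k by simp
  next
    case False
    hence z: "\<alpha> i j = 0" if "j < m" for j using assms i that unfolding ppm_def by metis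
    show ?thesis by (simp add: z)
  qed
  have col: "(\<Sum>i<n. Re (\<alpha> i j)) \<le> 1" if j: "j < m" for j
  proof (cases "\<exists>i<n. \<alpha> i j = 1")
    case True
    then obtain k where k: "k < n" "\<alpha> k j = 1" by blast
    have z: "\<alpha> i j = 0" if "i < n" "i \<noteq> k" for i
      using assms j k that unfolding ppm_def by metis
    have "(\<Sum>i<n. Re (\<alpha> i j)) = Re (\<alpha> k j)"
      by (rule sum_single) (use k z in auto)
    thus ?thesis using k by simp
  next
    case False
    hence z: "\<alpha> i j = 0" if "i < n" for i using assms j that unfolding ppm_def by metis
    show ?thesis by (simp add: z)
  qed
  have "(\<Sum>i<n. (cmod (\<Sum>j<m. \<alpha> i j * v j))\<^sup>2) = (\<Sum>i<n. \<Sum>j<m. Re (\<alpha> i j) * (cmod (v j))\<^sup>2)"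
    using row by simp
  also have "\<dots> = (\<Sum>j<m. (\<Sum>i<n. Re (\<alpha> i j)) * (cmod (v j))\<^sup>2)"
    by (subst sum.swap) (simp add: sum_distrib_right)
  also have "\<dots> \<le> (\<Sum>j<m. (cmod (v j))\<^sup>2)"
  proof (rule sum_mono)
    fix j assume "j \<in> {..<m}"
    hence "(\<Sum>i<n. Re (\<alpha> i j)) \<le> 1" using col by auto
    thus "(\<Sum>i<n. Re (\<alpha> i j)) * (cmod (v j))\<^sup>2 \<le> (cmod (v j))\<^sup>2"
      using mult_right_mono[of _ 1 "(cmod (v j))\<^sup>2"] by simp
  qed
  finally show ?thesis .
qed

lemma ppm_cmatnorm:
  assumes "ppm n m \<alpha>"
  shows "cmatnorm n m \<alpha> \<le> 1" "0 \<le> cmatnorm n m \<alpha>"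
proof -
  let ?S = "{sqrt (\<Sum>i<n. (cmod (\<Sum>j<m. \<alpha> i j * v j))\<^sup>2) | v.
                          (\<Sum>j<m. (cmod (v j))\<^sup>2) \<le> 1}"
  have ne: "sqrt (\<Sum>i<n. (cmod (\<Sum>j<m. \<alpha> i j * (\<lambda>_. 0) j))\<^sup>2) \<in> ?S"
    by (rule CollectI, rule exI[of _ "\<lambda>_. 0"]) simp
  hence ne': "?S \<noteq> {}" by blast
  have le: "s \<le> 1" if "s \<in> ?S" for s
  proof -
    from that obtain v where v: "s = sqrt (\<Sum>i<n. (cmod (\<Sum>j<m. \<alpha> i j * v j))\<^sup>2)"
      "(\<Sum>j<m. (cmod (v j))\<^sup>2) \<le> 1" by blast
    have "(\<Sum>i<n. (cmod (\<Sum>j<m. \<alpha> i j * v j))\<^sup>2) \<le> 1"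
      using ppm_sumsq[OF assms, of v] v(2) by linarith
    thus ?thesis using v(1) by simp
  qed
  show "cmatnorm n m \<alpha> \<le> 1" unfolding cmatnorm_def
    using cSup_least[OF ne', of 1] le by blast
  have "bdd_above ?S" using le by (intro bdd_aboveI[where M=1]) blast
  from cSup_upper[OF ne this] show "0 \<le> cmatnorm n m \<alpha>" unfolding cmatnorm_def by simp
qed

lemma os_0:
  assumes "operator_space sc V mn"
  shows "0 \<in> V"
  using assms unfolding operator_space_def by (elim conjE) blast

lemma os_add:
  assumes "operator_space sc V mn"
  shows "x \<in> V \<Longrightarrow> y \<in> V \<Longrightarrow> x + y \<in> V"
  using assms unfolding operator_space_def by (elim conjE) blast

lemma os_scm:
  assumes "operator_space sc V mn"
  shows "x \<in> V \<Longrightarrow> sc c x \<in> V"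
  using assms unfolding operator_space_def by (elim conjE) blast

lemma os_cong_all:
  assumes "operator_space sc V mn"
  shows "\<forall>n x y. (\<forall>i<n. \<forall>j<n. x i j = y i j) \<longrightarrow> mn n x = mn n y"
  using assms unfolding operator_space_def by (elim conjE) assumption

lemma os_cong:
  assumes "operator_space sc V mn" "\<And>i j. i < n \<Longrightarrow> j < n \<Longrightarrow> x i j = y i j"
  shows "mn n x = mn n y"
  by (rule os_cong_all[OF assms(1), rule_format]) (use assms(2) in auto)

lemma os_nonneg:
  assumes "operator_space sc V mn"
  shows "n \<ge> 1 \<Longrightarrow> matin V n x \<Longrightarrow> 0 \<le> mn n x"
  using assms unfolding operator_space_def by (elim conjE) blast

lemma os_zero:
  assumes "operator_space sc V mn"
  shows "n \<ge> 1 \<Longrightarrow> matin V n x \<Longrightarrow> (mn n x = 0 \<longleftrightarrow> (\<forall>i<n. \<forall>j<n. x i j = 0))"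
  using assms unfolding operator_space_def by (elim conjE) blast

lemma os_scal:
  assumes "operator_space sc V mn"
  shows "n \<ge> 1 \<Longrightarrow> matin V n x \<Longrightarrow> mn n (\<lambda>i j. sc c (x i j)) = cmod c * mn n x"
  using assms unfolding operator_space_def by (elim conjE) blast

lemma os_tri:
  assumes "operator_space sc V mn"
  shows "n \<ge> 1 \<Longrightarrow> matin V n x \<Longrightarrow> matin V n y \<Longrightarrow> mn n (\<lambda>i j. x i j + y i j) \<le> mn n x + mn n y"
  using assms unfolding operator_space_def by (elim conjE) blast

lemma os_smul_all:
  assumes "operator_space sc V mn"
  shows "\<forall>n\<ge>1. \<forall>m\<ge>1. \<forall>x \<alpha> \<beta>. matin V m x \<longrightarrow>
        mn n (smul sc m \<alpha> x \<beta>) \<le> cmatnorm n m \<alpha> * mn m x * cmatnorm m n \<beta>"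
  using assms unfolding operator_space_def by (elim conjE) assumption

lemma os_smul:
  assumes "operator_space sc V mn"
  shows "n \<ge> 1 \<Longrightarrow> m \<ge> 1 \<Longrightarrow> matin V m x \<Longrightarrow> mn n (smul sc m \<alpha> x \<beta>) \<le> cmatnorm n m \<alpha> * mn m x * cmatnorm m n \<beta>"
  using os_smul_all[OF assms] by simp

lemma os_dsum_all:
  assumes "operator_space sc V mn"
  shows "\<forall>n\<ge>1. \<forall>m\<ge>1. \<forall>x y. matin V n x \<longrightarrow> matin V m y \<longrightarrow>
        mn (n + m) (dsum n x y) = max (mn n x) (mn m y)"
  using assms unfolding operator_space_def by (elim conjE) assumption

lemma os_dsum:
  assumes "operator_space sc V mn"
  shows "n \<ge> 1 \<Longrightarrow> m \<ge> 1 \<Longrightarrow> matin V n x \<Longrightarrow> matin V m y \<Longrightarrow> mn (n + m) (dsum n x y) = max (mn n x) (mn m y)"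
  using os_dsum_all[OF assms] by simp

lemma compress:
  assumes os: "operator_space sc V mn"
    and sc0: "\<And>x. sc 0 x = 0" and sc1: "\<And>x. sc 1 x = x"
    and n: "n \<ge> 1" and m: "m \<ge> 1" and x: "matin V m x"
    and fP: "\<And>i. i < n \<Longrightarrow> P i \<Longrightarrow> f i < m"
    and finj: "\<And>i i'. i < n \<Longrightarrow> i' < n \<Longrightarrow> P i \<Longrightarrow> P i' \<Longrightarrow> f i = f i' \<Longrightarrow> i = i'"
    and gQ: "\<And>j. j < n \<Longrightarrow> Q j \<Longrightarrow> g j < m"
    and ginj: "\<And>j j'. j < n \<Longrightarrow> j' < n \<Longrightarrow> Q j \<Longrightarrow> Q j' \<Longrightarrow> g j = g j' \<Longrightarrow> j = j'"
  shows "mn n (\<lambda>i j. if P i \<and> Q j then x (f i) (g j) else 0) \<le> mn m x"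
proof -
  define \<alpha> where "\<alpha> = (\<lambda>i k. if P i \<and> k = f i then (1::complex) else 0)"
  define \<beta> where "\<beta> = (\<lambda>l j. if Q j \<and> l = g j then (1::complex) else 0)"
  have pa: "ppm n m \<alpha>" unfolding ppm_def \<alpha>_def using finj by auto
  have pb: "ppm m n \<beta>" unfolding ppm_def \<beta>_def using ginj by auto
  have eq: "smul sc m \<alpha> x \<beta> i j = (if P i \<and> Q j then x (f i) (g j) else 0)" if "i < n" "j < n" for i j
  proof -
    have t: "sc (\<alpha> i k * \<beta> l j) (x k l) = (if k = f i then (if l = g j then (if P i \<and> Q j then x k l else 0) else 0) else 0)" for k l
      by (auto simp: \<alpha>_def \<beta>_def sc0 sc1)
    have "(\<Sum>k<m. \<Sum>l<m. if k = f i then (if l = g j then (if P i \<and> Q j then x k l else 0) else 0) else 0)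
        = (if P i \<and> Q j then x (f i) (g j) else 0)"
    proof (cases "P i \<and> Q j")
      case True
      have "(\<Sum>l<m. if k = f i then (if l = g j then (if P i \<and> Q j then x k l else 0) else 0) else 0)
          = (if k = f i then x k (g j) else 0)" for k
        using True gQ that by (cases "k = f i") (simp_all add: sum.delta)
      thus ?thesis using True fP that by (simp add: sum.delta)
    next
      case False
      have z0: "(if P i \<and> Q j then x k l else 0) = 0" for k l using False by auto
      show ?thesis unfolding z0 if_cancel by (simp only: sum.neutral_const)
    qed
    thus ?thesis unfolding smul_def t .
  qed
  have "mn n (\<lambda>i j. if P i \<and> Q j then x (f i) (g j) else 0) = mn n (smul sc m \<alpha> x \<beta>)"
    by (rule os_cong[OF os]) (use eq in auto)
  also have "\<dots> \<le> cmatnorm n m \<alpha> * mn m x * cmatnorm m n \<beta>"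
    by (rule os_smul[OF os n m x])
  also have "\<dots> \<le> 1 * mn m x * 1"
  proof -
    have "0 \<le> mn m x" by (rule os_nonneg[OF os m x])
    thus ?thesis using ppm_cmatnorm[OF pa] ppm_cmatnorm[OF pb]
      by (intro mult_mono) (auto intro: mult_le_one mult_nonneg_nonneg)
  qed
  finally show ?thesis by simp
qed



definition rowm :: "(nat \<Rightarrow> 'v::zero) \<Rightarrow> nat \<Rightarrow> nat \<Rightarrow> 'v" where
  "rowm r = (\<lambda>i j. if i = 0 then r j else 0)"

lemma matin_rowm: "0 \<in> V \<Longrightarrow> (\<And>j. j < n \<Longrightarrow> r j \<in> V) \<Longrightarrow> matin V n (rowm r)"
  unfolding matin_def rowm_def by auto

lemma rowcomp:
  assumes os: "operator_space sc V mn"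
    and sc0: "\<And>x. sc 0 x = 0" and sc1: "\<And>x. sc 1 x = x"
    and s: "s \<ge> 1" and s': "s' \<ge> 1" and r: "\<And>j. j < s' \<Longrightarrow> r j \<in> V"
    and h1: "\<And>j. j < s \<Longrightarrow> r' j = r j \<or> r' j = 0"
    and h2: "\<And>j. j < s \<Longrightarrow> s' \<le> j \<Longrightarrow> r' j = 0"
  shows "mn s (rowm r') \<le> mn s' (rowm r)"
proof -
  have "mn s (rowm r') = mn s (\<lambda>i j. if i < s' \<and> (j < s' \<and> r' j = r j) then rowm r (id i) (id j) else 0)"
  proof (rule os_cong[OF os])
    fix i j assume "i < s" "j < s"
    thus "rowm r' i j = (if i < s' \<and> (j < s' \<and> r' j = r j) then rowm r (id i) (id j) else 0)"
      using h1[of j] h2[of j] s' unfolding rowm_def by (cases "j < s'") auto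
  qed
  also have "\<dots> \<le> mn s' (rowm r)"
    by (rule compress[OF os sc0 sc1 s s' matin_rowm[OF os_0[OF os] r]]) auto
  finally show ?thesis .
qed

lemma rowsingle:
  assumes os: "operator_space sc V mn"
    and sc0: "\<And>x. sc 0 x = 0" and sc1: "\<And>x. sc 1 x = x"
    and s: "s \<ge> 1" and k: "k < s" and v: "v \<in> V"
  shows "mn s (rowm (\<lambda>j. if j = k then v else 0)) \<le> lev1 mn v"
proof -
  have "mn s (rowm (\<lambda>j. if j = k then v else 0)) =
        mn s (\<lambda>i j. if i = 0 \<and> j = k then (\<lambda>_ _. v) ((\<lambda>_. 0::nat) i) ((\<lambda>_. 0::nat) j) else 0)"
    by (rule os_cong[OF os]) (auto simp: rowm_def)
  also have "\<dots> \<le> mn 1 (\<lambda>_ _. v)"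
    by (rule compress[OF os sc0 sc1 s]) (auto simp: matin_def v)
  finally show ?thesis unfolding lev1_def .
qed

lemma os_zero_mat:
  assumes os: "operator_space sc V mn" and s: "s \<ge> 1"
  shows "mn s (\<lambda>_ _. 0) = 0"
  using os_zero[OF os s, of "\<lambda>_ _. 0"] os_0[OF os] by (simp add: matin_def)

lemma os_sum:
  assumes os: "operator_space sc V mn" and s: "s \<ge> 1" and F: "finite F"
    and M: "\<And>t. t \<in> F \<Longrightarrow> matin V s (M t)"
  shows "mn s (\<lambda>i j. \<Sum>t\<in>F. M t i j) \<le> (\<Sum>t\<in>F. mn s (M t))"
  using F M
proof (induction F rule: finite_induct)
  case empty
  show ?case using os_zero_mat[OF os s] by simp
next
  case (insert t F)
  have Mi: "\<And>u. u \<in> insert t F \<Longrightarrow> matin V s (M u)" using insert.prems by blast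
  have mF: "matin V s (\<lambda>i j. \<Sum>t\<in>F. M t i j)"
  proof -
    have "(\<Sum>t\<in>G. M t i j) \<in> V" if "finite G" "G \<subseteq> F" "i < s" "j < s" for G i j
      using that
    proof (induction G rule: finite_induct)
      case empty thus ?case using os_0[OF os] by simp
    next
      case (insert u G)
      have "u \<in> F" using insert.prems by auto
      hence "matin V s (M u)" using Mi by blast
      hence "M u i j \<in> V" using insert.prems unfolding matin_def by blast
      thus ?case using insert os_add[OF os] by auto
    qed
    thus ?thesis unfolding matin_def using insert.hyps by blast
  qed
  have "mn s (\<lambda>i j. \<Sum>t\<in>insert t F. M t i j) = mn s (\<lambda>i j. M t i j + (\<Sum>t\<in>F. M t i j))"
    using insert.hyps by simp
  also have "\<dots> \<le> mn s (M t) + mn s (\<lambda>i j. \<Sum>t\<in>F. M t i j)"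
    using os_tri[OF os s Mi[of t] mF] by simp
  also have "\<dots> \<le> mn s (M t) + (\<Sum>t\<in>F. mn s (M t))"
    using insert by simp
  finally show ?case using insert.hyps by simp
qed

lemma rowsum:
  assumes os: "operator_space sc V mn"
    and sc0: "\<And>x. sc 0 x = 0" and sc1: "\<And>x. sc 1 x = x"
    and s: "s \<ge> 1" and r: "\<And>j. j < s \<Longrightarrow> r j \<in> V"
  shows "mn s (rowm r) \<le> (\<Sum>k<s. lev1 mn (r k))"
proof -
  have "mn s (rowm r) = mn s (\<lambda>i j. \<Sum>k<s. rowm (\<lambda>j. if j = k then r k else 0) i j)"
  proof (rule os_cong[OF os])
    fix i j assume "i < s" "j < s"
    thus "rowm r i j = (\<Sum>k<s. rowm (\<lambda>j. if j = k then r k else 0) i j)"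
      unfolding rowm_def by (simp add: sum.delta')
  qed
  also have "\<dots> \<le> (\<Sum>k<s. mn s (rowm (\<lambda>j. if j = k then r k else 0)))"
    by (rule os_sum[OF os s]) (auto intro!: matin_rowm os_0[OF os] r)
  also have "\<dots> \<le> (\<Sum>k<s. lev1 mn (r k))"
    by (rule sum_mono) (auto intro!: rowsingle[OF os sc0 sc1 s] r)
  finally show ?thesis .
qed

lemma divk: fixes i k n :: nat assumes "k*n \<le> i" "i < k*n+n" shows "i div n = k" "i mod n = i - k*n"
proof -
  obtain d where d: "i = k*n + d" "d < n" using assms by (metis add_less_cancel_left le_Suc_ex)
  thus "i div n = k" "i mod n = i - k*n" by simp_all
qed

lemma divlt: fixes i k n :: nat assumes "i < k*n" shows "i div n < k"
  using assms by (simp add: less_mult_imp_div_less)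

definition bdiag :: "nat \<Rightarrow> nat \<Rightarrow> (nat \<Rightarrow> nat \<Rightarrow> 'v::zero) \<Rightarrow> nat \<Rightarrow> nat \<Rightarrow> 'v" where
  "bdiag k n X = (\<lambda>r s. if r < k * n \<and> s < k * n \<and> r div n = s div n then X (r mod n) (s mod n) else 0)"

lemma bdiag_norm:
  assumes os: "operator_space sc V mn" and n: "n \<ge> 1" and X: "matin V n X" and k: "k \<ge> 1"
  shows "mn (k * n) (bdiag k n X) = mn n X \<and> matin V (k * n) (bdiag k n X)"
  using k
proof (induction k rule: dec_induct)
  case base
  have "mn n (bdiag 1 n X) = mn n X"
    by (rule os_cong[OF os]) (auto simp: bdiag_def)
  moreover have "matin V (1 * n) (bdiag 1 n X)"
    using X os_0[OF os] n by (auto simp: bdiag_def matin_def)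
  ultimately show ?case by simp
next
  case (step k)
  have k1: "k * n \<ge> 1" using step n by simp
  have e: "Suc k * n = k * n + n" by simp
  have "mn (Suc k * n) (bdiag (Suc k) n X) = mn (k * n + n) (dsum (k * n) (bdiag k n X) X)"
    unfolding e
  proof (rule os_cong[OF os])
    fix i j assume "i < k * n + n" "j < k * n + n"
    thus "bdiag (Suc k) n X i j = dsum (k * n) (bdiag k n X) X i j"
      using n divk[of k n i] divk[of k n j] divlt[of i k n] divlt[of j k n]
      by (auto simp: bdiag_def dsum_def)
  qed
  also have "\<dots> = max (mn (k * n) (bdiag k n X)) (mn n X)"
    using os_dsum[OF os k1 n] step.IH X by blast
  finally have "mn (Suc k * n) (bdiag (Suc k) n X) = mn n X" using step.IH by simp
  moreover have "matin V (Suc k * n) (bdiag (Suc k) n X)"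
    using X os_0[OF os] n by (auto simp: bdiag_def matin_def)
  ultimately show ?case by simp
qed



lemma add_diff: fixes f :: "'u::ab_group_add \<Rightarrow> 'w::ab_group_add"
  assumes "\<And>x y. f (x + y) = f x + f y" shows "f (x - y) = f x - f y"
  by (rule additive.diff[OF additive.intro]) (rule assms)
lemma add_zero: fixes f :: "'u::ab_group_add \<Rightarrow> 'w::ab_group_add"
  assumes "\<And>x y. f (x + y) = f x + f y" shows "f 0 = 0"
  by (rule additive.zero[OF additive.intro]) (rule assms)

locale corr =
  fixes \<A> :: "'a::{real_normed_algebra,banach} opalg"
    and \<B> :: "'b::{real_normed_algebra,banach} opalg"
    and \<X> :: "('a, 'b, 'x::{real_normed_vector,banach}) opcorr"
  assumes H: "op_star_corr \<A> \<B> \<X>"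
begin

lemma HA: "op_star_algebra \<A>" using H unfolding op_star_corr_def by (elim conjE) assumption
lemma HB: "op_star_algebra \<B>" using H unfolding op_star_corr_def by (elim conjE) assumption
lemma HC: "cstar_corr \<A> \<B> \<X>" using H unfolding op_star_corr_def by (elim conjE) assumption
lemma osX: "operator_space (xsc \<X>) (xcar \<X>) (xmn \<X>)" using H unfolding op_star_corr_def by (elim conjE) assumption
lemma closX: "closure (xcar \<X>) = UNIV" using H unfolding op_star_corr_def by (elim conjE) assumption
lemma lact_car_all: "\<forall>a\<in>acar \<A>. \<forall>x\<in>xcar \<X>. lact \<X> a x \<in> xcar \<X>" using H unfolding op_star_corr_def by (elim conjE) assumption
lemma ipr_car_all: "\<forall>x\<in>xcar \<X>. \<forall>y\<in>xcar \<X>. ipr \<X> x y \<in> acar \<B>" using H unfolding op_star_corr_def by (elim conjE) assumption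
lemma lcc_all: "(\<forall>n\<ge>1. \<forall>a x. matin (acar \<A>) n a \<longrightarrow> matin (xcar \<X>) n x \<longrightarrow>
        xmn \<X> n (\<lambda>i j. \<Sum>k<n. lact \<X> (a i k) (x k j)) \<le> amn \<A> n a * xmn \<X> n x)"
  using H unfolding op_star_corr_def by (elim conjE) assumption
lemma pcc_all: "(\<forall>n\<ge>1. \<forall>x y. matin (xcar \<X>) n x \<longrightarrow> matin (xcar \<X>) n y \<longrightarrow>
        amn \<B> n (\<lambda>i j. \<Sum>k<n. ipr \<X> (x k i) (y k j)) \<le> xmn \<X> n x * xmn \<X> n y)"
  using H unfolding op_star_corr_def by (elim conjE) assumption

lemma osA: "operator_space (asc \<A>) (acar \<A>) (amn \<A>)" using HA unfolding op_star_algebra_def by (elim conjE) assumption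
lemma osB: "operator_space (asc \<B>) (acar \<B>) (amn \<B>)" using HB unfolding op_star_algebra_def by (elim conjE) assumption
lemma csA: "cstar_algebra (asc \<A>) (ast \<A>)" using HA unfolding op_star_algebra_def by (elim conjE) assumption
lemma csB: "cstar_algebra (asc \<B>) (ast \<B>)" using HB unfolding op_star_algebra_def by (elim conjE) assumption

lemma ascA_real: "\<forall>r x. asc \<A> (complex_of_real r) x = r *\<^sub>R x" using csA unfolding cstar_algebra_def by (elim conjE) assumption
lemma ascB_real: "\<forall>r x. asc \<B> (complex_of_real r) x = r *\<^sub>R x" using csB unfolding cstar_algebra_def by (elim conjE) assumption
lemma astB_add: "\<forall>x y. ast \<B> (x + y) = ast \<B> x + ast \<B> y" using csB unfolding cstar_algebra_def by (elim conjE) assumption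
lemma astB_sc: "\<forall>c x. ast \<B> (asc \<B> c x) = asc \<B> (cnj c) (ast \<B> x)" using csB unfolding cstar_algebra_def by (elim conjE) assumption
lemma astB_mult: "\<forall>x y. ast \<B> (x * y) = ast \<B> y * ast \<B> x" using csB unfolding cstar_algebra_def by (elim conjE) assumption

lemma xsc_real: "\<forall>r x. xsc \<X> (complex_of_real r) x = r *\<^sub>R x" using HC unfolding cstar_corr_def by (elim conjE) assumption
lemma ract_add_all: "\<forall>x y b. ract \<X> (x + y) b = ract \<X> x b + ract \<X> y b" using HC unfolding cstar_corr_def by (elim conjE) assumption
lemma ract_sc_all: "(\<forall>c x b. ract \<X> (xsc \<X> c x) b = xsc \<X> c (ract \<X> x b) \<and>
              ract \<X> x (asc \<B> c b) = xsc \<X> c (ract \<X> x b))" using HC unfolding cstar_corr_def by (elim conjE) assumption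
lemma ipr_add_all: "\<forall>x y z. ipr \<X> x (y + z) = ipr \<X> x y + ipr \<X> x z" using HC unfolding cstar_corr_def by (elim conjE) assumption
lemma ipr_ract_all: "\<forall>x y b. ipr \<X> x (ract \<X> y b) = ipr \<X> x y * b" using HC unfolding cstar_corr_def by (elim conjE) assumption
lemma ipr_sym_all: "\<forall>x y. ipr \<X> y x = ast \<B> (ipr \<X> x y)" using HC unfolding cstar_corr_def by (elim conjE) assumption
lemma norm_all: "\<forall>x. norm x = sqrt (norm (ipr \<X> x x))" using HC unfolding cstar_corr_def by (elim conjE) assumption
lemma lact_add1_all: "\<forall>a x y. lact \<X> a (x + y) = lact \<X> a x + lact \<X> a y" using HC unfolding cstar_corr_def by (elim conjE) assumption
lemma lact_add2_all: "\<forall>a a' x. lact \<X> (a + a') x = lact \<X> a x + lact \<X> a' x" using HC unfolding cstar_corr_def by (elim conjE) assumption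
lemma xsc_add_all: "\<forall>c x y. xsc \<X> c (x + y) = xsc \<X> c x + xsc \<X> c y" using HC unfolding cstar_corr_def by (elim conjE) assumption

lemma xsc0: "xsc \<X> 0 x = 0" using xsc_real by (metis of_real_0 scaleR_zero_left)
lemma xsc1: "xsc \<X> 1 x = x" using xsc_real by (metis of_real_1 scaleR_one)
lemma xscm1: "xsc \<X> (-1) x = - x" using xsc_real by (metis of_real_1 of_real_minus scaleR_minus1_left)
lemma ascA0: "asc \<A> 0 x = 0" using ascA_real by (metis of_real_0 scaleR_zero_left)
lemma ascA1: "asc \<A> 1 x = x" using ascA_real by (metis of_real_1 scaleR_one)
lemma ascB0: "asc \<B> 0 x = 0" using ascB_real by (metis of_real_0 scaleR_zero_left)
lemma ascB1: "asc \<B> 1 x = x" using ascB_real by (metis of_real_1 scaleR_one)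

lemma lact_x0: "lact \<X> a 0 = 0" by (rule add_zero) (use lact_add1_all in blast)
lemma lact_0x: "lact \<X> 0 x = 0" by (rule add_zero[where f="\<lambda>a. lact \<X> a x"]) (use lact_add2_all in blast)
lemma lact_diff: "lact \<X> a (x - y) = lact \<X> a x - lact \<X> a y" by (rule add_diff) (use lact_add1_all in blast)
lemma xsc_x0: "xsc \<X> c 0 = 0" by (rule add_zero) (use xsc_add_all in blast)
lemma xsc_diff: "xsc \<X> c (x - y) = xsc \<X> c x - xsc \<X> c y" by (rule add_diff) (use xsc_add_all in blast)
lemma ipr_x0: "ipr \<X> x 0 = 0" by (rule add_zero) (use ipr_add_all in blast)
lemma ipr_diff2: "ipr \<X> x (y - z) = ipr \<X> x y - ipr \<X> x z" by (rule add_diff) (use ipr_add_all in blast)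
lemma astB0: "ast \<B> 0 = 0" by (rule add_zero) (use astB_add in blast)
lemma astB_diff: "ast \<B> (x - y) = ast \<B> x - ast \<B> y" by (rule add_diff) (use astB_add in blast)
lemma ipr_0x: "ipr \<X> 0 y = 0" using ipr_sym_all ipr_x0 astB0 by metis
lemma ipr_diff1: "ipr \<X> (x - y) z = ipr \<X> x z - ipr \<X> y z"
  using ipr_sym_all ipr_diff2 astB_diff by metis
lemma ract_diff: "ract \<X> (x - y) b = ract \<X> x b - ract \<X> y b"
  by (rule add_diff[where f="\<lambda>x. ract \<X> x b"]) (use ract_add_all in blast)

lemma xcar_diff: "x \<in> xcar \<X> \<Longrightarrow> y \<in> xcar \<X> \<Longrightarrow> x - y \<in> xcar \<X>"
proof -
  assume "x \<in> xcar \<X>" "y \<in> xcar \<X>"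
  hence "x + xsc \<X> (-1) y \<in> xcar \<X>" using os_add[OF osX] os_scm[OF osX] by blast
  thus ?thesis by (simp add: xscm1)
qed

end


context corr begin

lemma mrow: "(\<And>j. j < n \<Longrightarrow> u j \<in> xcar \<X>) \<Longrightarrow> matin (xcar \<X>) n (rowm u)"
  unfolding matin_def rowm_def using os_0[OF osX] by auto

lemma pair_row:
  assumes n: "n \<ge> 1" and u: "\<And>j. j < n \<Longrightarrow> u j \<in> xcar \<X>" and w: "\<And>j. j < n \<Longrightarrow> w j \<in> xcar \<X>"
  shows "amn \<B> n (\<lambda>i j. ipr \<X> (u i) (w j)) \<le> xmn \<X> n (rowm u) * xmn \<X> n (rowm w)"
proof -
  have "amn \<B> n (\<lambda>i j. ipr \<X> (u i) (w j)) = amn \<B> n (\<lambda>i j. \<Sum>k<n. ipr \<X> (rowm u k i) (rowm w k j))"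
  proof (rule os_cong[OF osB])
    fix i j assume "i < n" "j < n"
    show "ipr \<X> (u i) (w j) = (\<Sum>k<n. ipr \<X> (rowm u k i) (rowm w k j))"
      by (rule sym, subst sum_single[where a=0]) (use n in \<open>auto simp: rowm_def ipr_0x\<close>)
  qed
  also have "\<dots> \<le> xmn \<X> n (rowm u) * xmn \<X> n (rowm w)"
    using pcc_all n mrow[of n u, OF u] mrow[of n w, OF w] by blast
  finally show ?thesis .
qed

lemma lact_row:
  assumes n: "n \<ge> 1" and u: "\<And>j. j < n \<Longrightarrow> u j \<in> xcar \<X>" and a: "a \<in> acar \<A>"
  shows "xmn \<X> n (rowm (\<lambda>j. lact \<X> a (u j))) \<le> lev1 (amn \<A>) a * xmn \<X> n (rowm u)"
proof -
  define a' where "a' = (\<lambda>(i::nat) (k::nat). if i = 0 \<and> k = 0 then (\<lambda>_ _. a) ((\<lambda>_. 0::nat) i) ((\<lambda>_. 0::nat) k) else 0)"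
  have ma: "matin (acar \<A>) n a'" unfolding a'_def matin_def using a os_0[OF osA] by auto
  have "xmn \<X> n (rowm (\<lambda>j. lact \<X> a (u j))) = xmn \<X> n (\<lambda>i j. \<Sum>k<n. lact \<X> (a' i k) (rowm u k j))"
  proof (rule os_cong[OF osX])
    fix i j assume "i < n" "j < n"
    show "rowm (\<lambda>j. lact \<X> a (u j)) i j = (\<Sum>k<n. lact \<X> (a' i k) (rowm u k j))"
      by (rule sym, subst sum_single[where a=0]) (use n in \<open>auto simp: rowm_def a'_def lact_0x lact_x0\<close>)
  qed
  also have "\<dots> \<le> amn \<A> n a' * xmn \<X> n (rowm u)"
    using lcc_all n ma mrow[of n u, OF u] by blast
  also have "\<dots> \<le> lev1 (amn \<A>) a * xmn \<X> n (rowm u)"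
  proof (rule mult_right_mono)
    show "amn \<A> n a' \<le> lev1 (amn \<A>) a" unfolding a'_def lev1_def
      by (rule compress[OF osA ascA0 ascA1 n]) (auto simp: matin_def a)
    show "0 \<le> xmn \<X> n (rowm u)" by (rule os_nonneg[OF osX n mrow[of n u, OF u]])
  qed
  finally show ?thesis .
qed

lemma sc_row:
  assumes n: "n \<ge> 1" and u: "\<And>j. j < n \<Longrightarrow> u j \<in> xcar \<X>"
  shows "xmn \<X> n (rowm (\<lambda>j. xsc \<X> c (u j))) = cmod c * xmn \<X> n (rowm u)"
proof -
  have "xmn \<X> n (rowm (\<lambda>j. xsc \<X> c (u j))) = xmn \<X> n (\<lambda>i j. xsc \<X> c (rowm u i j))"
    by (rule os_cong[OF osX]) (auto simp: rowm_def xsc_x0)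
  also have "\<dots> = cmod c * xmn \<X> n (rowm u)"
    by (rule os_scal[OF osX n mrow[of n u, OF u]])
  finally show ?thesis .
qed

lemma add_row:
  assumes n: "n \<ge> 1" and u: "\<And>j. j < n \<Longrightarrow> u j \<in> xcar \<X>" and w: "\<And>j. j < n \<Longrightarrow> w j \<in> xcar \<X>"
  shows "xmn \<X> n (rowm (\<lambda>j. u j + w j)) \<le> xmn \<X> n (rowm u) + xmn \<X> n (rowm w)"
proof -
  have "xmn \<X> n (rowm (\<lambda>j. u j + w j)) = xmn \<X> n (\<lambda>i j. rowm u i j + rowm w i j)"
    by (rule os_cong[OF osX]) (auto simp: rowm_def)
  also have "\<dots> \<le> xmn \<X> n (rowm u) + xmn \<X> n (rowm w)"
    by (rule os_tri[OF osX n mrow[of n u, OF u] mrow[of n w, OF w]])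
  finally show ?thesis .
qed

lemma lev1X_nonneg: "x \<in> xcar \<X> \<Longrightarrow> 0 \<le> lev1 (xmn \<X>) x"
  unfolding lev1_def by (rule os_nonneg[OF osX]) (auto simp: matin_def)
lemma lev1A_nonneg: "a \<in> acar \<A> \<Longrightarrow> 0 \<le> lev1 (amn \<A>) a"
  unfolding lev1_def by (rule os_nonneg[OF osA]) (auto simp: matin_def)
lemma rowX_nonneg: "n \<ge> 1 \<Longrightarrow> (\<And>j. j < n \<Longrightarrow> u j \<in> xcar \<X>) \<Longrightarrow> 0 \<le> xmn \<X> n (rowm u)"
  by (rule os_nonneg[OF osX], assumption, rule mrow)

lemma w_row:
  assumes n: "n \<ge> 1" and u: "\<And>j. j < n \<Longrightarrow> u j \<in> xcar \<X>" and a: "a \<in> acar \<A>"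
  shows "xmn \<X> n (rowm (\<lambda>j. lact \<X> a (u j) + xsc \<X> l (u j))) \<le> (lev1 (amn \<A>) a + cmod l) * xmn \<X> n (rowm u)"
proof -
  have m1: "lact \<X> a (u j) \<in> xcar \<X>" if "j < n" for j using lact_car_all a u that by blast
  have m2: "xsc \<X> l (u j) \<in> xcar \<X>" if "j < n" for j using os_scm[OF osX] u that by blast
  show ?thesis
    using add_row[of n "\<lambda>j. lact \<X> a (u j)" "\<lambda>j. xsc \<X> l (u j)", OF n m1 m2] lact_row[of n u a, OF n u a] sc_row[of n u l, OF n u] by (simp add: algebra_simps)
qed

end


definition trunc :: "(nat \<Rightarrow> 'x::zero) \<Rightarrow> nat \<Rightarrow> nat \<Rightarrow> 'x" where
  "trunc \<xi> N = (\<lambda>j. if j < N then \<xi> j else 0)"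

context corr begin

lemma trunc_mem: "(\<And>n. \<xi> n \<in> xcar \<X>) \<Longrightarrow> trunc \<xi> N j \<in> xcar \<X>"
  unfolding trunc_def using os_0[OF osX] by auto

lemma rc_row:
  assumes "row_cauchy \<X> \<xi>" "\<epsilon> > 0"
  shows "\<exists>N0. \<forall>N\<ge>N0. \<forall>N'\<ge>N0. xmn \<X> (Suc (max N N')) (rowm (\<lambda>j. trunc \<xi> N j - trunc \<xi> N' j)) < \<epsilon>"
  using assms unfolding row_cauchy_def rowm_def trunc_def by blast

lemma rowcompX:
  assumes "s \<ge> 1" "s' \<ge> 1" "\<And>j. j < s' \<Longrightarrow> r j \<in> xcar \<X>"
    "\<And>j. j < s \<Longrightarrow> r' j = r j \<or> r' j = 0" "\<And>j. j < s \<Longrightarrow> s' \<le> j \<Longrightarrow> r' j = 0"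
  shows "xmn \<X> s (rowm r') \<le> xmn \<X> s' (rowm r)"
  by (rule rowcomp[OF osX xsc0 xsc1]) (use assms in auto)

lemma row_bound:
  assumes xi: "\<And>n. \<xi> n \<in> xcar \<X>" and rc: "row_cauchy \<X> \<xi>"
  shows "\<exists>Bd. \<forall>n\<ge>1. \<forall>N. xmn \<X> n (rowm (trunc \<xi> N)) \<le> Bd"
proof -
  obtain N0 where N0: "\<And>N N'. N \<ge> N0 \<Longrightarrow> N' \<ge> N0 \<Longrightarrow>
      xmn \<X> (Suc (max N N')) (rowm (\<lambda>j. trunc \<xi> N j - trunc \<xi> N' j)) < 1"
    using rc_row[OF rc, of 1] by auto
  have tm: "\<And>N j. trunc \<xi> N j \<in> xcar \<X>" by (rule trunc_mem[OF xi])
  define \<rho> where "\<rho> M = xmn \<X> (Suc M) (rowm (trunc \<xi> M))" for M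
  have rM: "\<rho> M \<le> 1 + \<rho> N0" if M: "M \<ge> N0" for M
  proof -
    have "\<rho> M = xmn \<X> (Suc M) (rowm (\<lambda>j. (trunc \<xi> M j - trunc \<xi> N0 j) + trunc \<xi> N0 j))"
      unfolding \<rho>_def by simp
    also have "\<dots> \<le> xmn \<X> (Suc M) (rowm (\<lambda>j. trunc \<xi> M j - trunc \<xi> N0 j)) + xmn \<X> (Suc M) (rowm (trunc \<xi> N0))"
      by (rule add_row) (auto intro: xcar_diff tm)
    also have "\<dots> \<le> 1 + \<rho> N0"
    proof (rule add_mono)
      show "xmn \<X> (Suc M) (rowm (\<lambda>j. trunc \<xi> M j - trunc \<xi> N0 j)) \<le> 1"
        using N0[OF M order.refl] M by (simp add: max_def)
      show "xmn \<X> (Suc M) (rowm (trunc \<xi> N0)) \<le> \<rho> N0"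
        unfolding \<rho>_def by (rule rowcompX) (auto simp: tm xi os_0[OF osX] trunc_def)
    qed
    finally show ?thesis .
  qed
  have "xmn \<X> n (rowm (trunc \<xi> N)) \<le> 1 + \<rho> N0" if n: "n \<ge> 1" for n N
  proof -
    have "xmn \<X> n (rowm (trunc \<xi> N)) \<le> \<rho> (max N N0)"
      unfolding \<rho>_def by (rule rowcompX) (use n in \<open>auto simp: tm xi os_0[OF osX] trunc_def\<close>)
    also have "\<dots> \<le> 1 + \<rho> N0" by (rule rM) simp
    finally show ?thesis .
  qed
  thus ?thesis by blast
qed


lemma KB_part:
  assumes xi: "\<And>n. \<xi> n \<in> xcar \<X>" and rc: "row_cauchy \<X> \<xi>" and a: "a \<in> acar \<A>"
  shows "KB_cauchy \<B> (\<lambda>n m. ipr \<X> (\<xi> n) (lact \<X> a (\<xi> m) + xsc \<X> l (\<xi> m)))"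
  unfolding KB_cauchy_def
proof (intro allI impI)
  fix \<epsilon> :: real assume e: "\<epsilon> > 0"
  obtain Bd where Bd: "\<And>n N. n \<ge> 1 \<Longrightarrow> xmn \<X> n (rowm (trunc \<xi> N)) \<le> Bd"
    using row_bound[OF xi rc] by blast
  have tm: "\<And>N j. trunc \<xi> N j \<in> xcar \<X>" by (rule trunc_mem[OF xi])
  have Bd0: "0 \<le> Bd" using Bd[of 1 0] rowX_nonneg[of 1 "trunc \<xi> 0"] tm by force
  define K where "K = lev1 (amn \<A>) a + cmod l"
  have K0: "0 \<le> K" unfolding K_def using lev1A_nonneg[OF a] by simp
  define d where "d = \<epsilon> / (2 * K * Bd + 1)"
  have d0: "0 < d" unfolding d_def using e K0 Bd0 by (simp add: add_nonneg_pos)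
  obtain N0 where N0: "\<And>N N'. N \<ge> N0 \<Longrightarrow> N' \<ge> N0 \<Longrightarrow>
      xmn \<X> (Suc (max N N')) (rowm (\<lambda>j. trunc \<xi> N j - trunc \<xi> N' j)) < d"
    using rc_row[OF rc d0] by auto
  show "\<exists>N0. \<forall>N\<ge>N0. \<forall>N'\<ge>N0. \<forall>n\<ge>1. amn \<B> n (\<lambda>i j.
      (if i < N \<and> j < N then ipr \<X> (\<xi> i) (lact \<X> a (\<xi> j) + xsc \<X> l (\<xi> j)) else 0) -
      (if i < N' \<and> j < N' then ipr \<X> (\<xi> i) (lact \<X> a (\<xi> j) + xsc \<X> l (\<xi> j)) else 0)) \<le> \<epsilon>"
  proof (intro exI allI impI)
    fix N N' n :: nat assume NN: "N \<ge> N0" "N' \<ge> N0" and n: "n \<ge> 1"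
    define w where "w M j = lact \<X> a (trunc \<xi> M j) + xsc \<X> l (trunc \<xi> M j)" for M j
    define D where "D j = trunc \<xi> N j - trunc \<xi> N' j" for j
    have wm: "w M j \<in> xcar \<X>" for M j
      unfolding w_def using lact_car_all a tm os_scm[OF osX] os_add[OF osX] by blast
    have Dm: "D j \<in> xcar \<X>" for j unfolding D_def by (rule xcar_diff[OF tm tm])
    have eqc: "(if i < M \<and> j < M then ipr \<X> (\<xi> i) (lact \<X> a (\<xi> j) + xsc \<X> l (\<xi> j)) else 0)
        = ipr \<X> (trunc \<xi> M i) (w M j)" for M i j
      unfolding w_def trunc_def by (auto simp: ipr_0x ipr_x0 lact_x0 xsc_x0)
    have wd: "w N j - w N' j = lact \<X> a (D j) + xsc \<X> l (D j)" for j
      unfolding w_def D_def by (simp add: lact_diff xsc_diff algebra_simps)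
    have "amn \<B> n (\<lambda>i j.
      (if i < N \<and> j < N then ipr \<X> (\<xi> i) (lact \<X> a (\<xi> j) + xsc \<X> l (\<xi> j)) else 0) -
      (if i < N' \<and> j < N' then ipr \<X> (\<xi> i) (lact \<X> a (\<xi> j) + xsc \<X> l (\<xi> j)) else 0))
      = amn \<B> n (\<lambda>i j. ipr \<X> (D i) (w N j) + ipr \<X> (trunc \<xi> N' i) (lact \<X> a (D j) + xsc \<X> l (D j)))"
    proof -
      have "ipr \<X> (trunc \<xi> N i) (w N j) - ipr \<X> (trunc \<xi> N' i) (w N' j) =
            ipr \<X> (D i) (w N j) + ipr \<X> (trunc \<xi> N' i) (lact \<X> a (D j) + xsc \<X> l (D j))" for i j
        unfolding wd[symmetric] by (simp add: D_def ipr_diff1 ipr_diff2)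
      thus ?thesis unfolding eqc by simp
    qed
    also have "\<dots> \<le> amn \<B> n (\<lambda>i j. ipr \<X> (D i) (w N j)) +
                   amn \<B> n (\<lambda>i j. ipr \<X> (trunc \<xi> N' i) (lact \<X> a (D j) + xsc \<X> l (D j)))"
    proof (rule os_tri[OF osB n])
      show "matin (acar \<B>) n (\<lambda>i j. ipr \<X> (D i) (w N j))"
        unfolding matin_def using ipr_car_all Dm wm by blast
      have "lact \<X> a (D j) + xsc \<X> l (D j) \<in> xcar \<X>" for j
        using lact_car_all a Dm os_scm[OF osX] os_add[OF osX] by blast
      thus "matin (acar \<B>) n (\<lambda>i j. ipr \<X> (trunc \<xi> N' i) (lact \<X> a (D j) + xsc \<X> l (D j)))"
        unfolding matin_def using ipr_car_all tm by blast
    qed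
    also have "\<dots> \<le> d * (K * Bd) + Bd * (K * d)"
    proof (rule add_mono)
      have dD: "xmn \<X> n (rowm D) \<le> d"
      proof -
        have "xmn \<X> n (rowm D) \<le> xmn \<X> (Suc (max N N')) (rowm D)"
          by (rule rowcompX) (use n Dm in \<open>auto simp: D_def trunc_def\<close>)
        thus ?thesis using N0[OF NN] unfolding D_def by simp
      qed
      have "amn \<B> n (\<lambda>i j. ipr \<X> (D i) (w N j)) \<le> xmn \<X> n (rowm D) * xmn \<X> n (rowm (w N))"
        by (rule pair_row[OF n]) (use Dm wm in auto)
      also have "\<dots> \<le> d * (K * Bd)"
      proof (rule mult_mono)
        show "xmn \<X> n (rowm (w N)) \<le> K * Bd"
        proof -
          have "xmn \<X> n (rowm (w N)) \<le> K * xmn \<X> n (rowm (trunc \<xi> N))"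
            unfolding w_def K_def by (rule w_row[OF n _ a]) (rule tm)
          also have "\<dots> \<le> K * Bd" by (rule mult_left_mono[OF Bd[OF n] K0])
          finally show ?thesis .
        qed
        show "0 \<le> d" using d0 by simp
        show "0 \<le> xmn \<X> n (rowm (w N))" by (rule rowX_nonneg[OF n]) (rule wm)
      qed (rule dD)
      finally show "amn \<B> n (\<lambda>i j. ipr \<X> (D i) (w N j)) \<le> d * (K * Bd)" .
      have "amn \<B> n (\<lambda>i j. ipr \<X> (trunc \<xi> N' i) (lact \<X> a (D j) + xsc \<X> l (D j)))
          \<le> xmn \<X> n (rowm (trunc \<xi> N')) * xmn \<X> n (rowm (\<lambda>j. lact \<X> a (D j) + xsc \<X> l (D j)))"
        by (rule pair_row[OF n]) (use tm lact_car_all a Dm os_scm[OF osX] os_add[OF osX] in blast)+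
      also have "\<dots> \<le> Bd * (K * d)"
      proof (rule mult_mono)
        show "xmn \<X> n (rowm (trunc \<xi> N')) \<le> Bd" by (rule Bd[OF n])
        have "xmn \<X> n (rowm (\<lambda>j. lact \<X> a (D j) + xsc \<X> l (D j))) \<le> K * xmn \<X> n (rowm D)"
          unfolding K_def by (rule w_row[OF n _ a]) (rule Dm)
        also have "\<dots> \<le> K * d" by (rule mult_left_mono[OF dD K0])
        finally show "xmn \<X> n (rowm (\<lambda>j. lact \<X> a (D j) + xsc \<X> l (D j))) \<le> K * d" .
        show "0 \<le> Bd" by (rule Bd0)
        show "0 \<le> xmn \<X> n (rowm (\<lambda>j. lact \<X> a (D j) + xsc \<X> l (D j)))"
          by (rule rowX_nonneg[OF n]) (use lact_car_all a Dm os_scm[OF osX] os_add[OF osX] in blast)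
      qed
      finally show "amn \<B> n (\<lambda>i j. ipr \<X> (trunc \<xi> N' i) (lact \<X> a (D j) + xsc \<X> l (D j))) \<le> Bd * (K * d)" .
    qed
    also have "\<dots> \<le> \<epsilon>"
    proof -
      have "d * (K * Bd) + Bd * (K * d) = d * (2 * K * Bd)" by (simp add: algebra_simps)
      also have "\<dots> \<le> d * (2 * K * Bd + 1)" using d0 by simp
      also have "\<dots> = \<epsilon>"
      proof -
        have "2 * K * Bd + 1 > 0" using K0 Bd0 by (simp add: add_nonneg_pos)
        thus ?thesis unfolding d_def by simp
      qed
      finally show ?thesis .
    qed
    finally show "amn \<B> n (\<lambda>i j.
      (if i < N \<and> j < N then ipr \<X> (\<xi> i) (lact \<X> a (\<xi> j) + xsc \<X> l (\<xi> j)) else 0) -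
      (if i < N' \<and> j < N' then ipr \<X> (\<xi> i) (lact \<X> a (\<xi> j) + xsc \<X> l (\<xi> j)) else 0)) \<le> \<epsilon>" .
  qed
qed

end


lemma modeq: fixes t r n :: nat assumes n: "n \<ge> 1"
  shows "(t div n = r div n \<and> t mod n = 0) \<longleftrightarrow> t = r div n * n"
proof
  assume "t div n = r div n \<and> t mod n = 0"
  thus "t = r div n * n" by (metis add_0_right div_mult_mod_eq)
next
  assume "t = r div n * n"
  thus "t div n = r div n \<and> t mod n = 0" using n by simp
qed

context corr begin

lemma xsum_mem: "finite F \<Longrightarrow> (\<And>t. t \<in> F \<Longrightarrow> f t \<in> xcar \<X>) \<Longrightarrow> sum f F \<in> xcar \<X>"
  by (induction F rule: finite_induct) (auto intro: os_0[OF osX] os_add[OF osX])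

lemma bd_entry:
  assumes n: "n \<ge> 1"
  shows "bdiag k n (rowm (trunc \<xi> n)) t r = (if t < k * n \<and> r < k * n \<and> t = r div n * n then \<xi> (r mod n) else 0)"
proof -
  have "r mod n < n" using n by simp
  thus ?thesis unfolding bdiag_def rowm_def trunc_def using modeq[OF n, of t r] by auto
qed

lemma cb_part:
  assumes xi: "\<And>n. \<xi> n \<in> xcar \<X>" and rc: "row_cauchy \<X> \<xi>"
  shows "\<exists>C. \<forall>k\<ge>1. \<forall>a. matin (acar \<A>) k a \<longrightarrow> (\<forall>n\<ge>1.
        amn \<B> (k * n) (blk k n (\<lambda>p q i j. ipr \<X> (\<xi> i) (lact \<X> (a p q) (\<xi> j)))) \<le> C * amn \<A> k a)"
proof -
  obtain Bd where Bd: "\<And>n N. n \<ge> 1 \<Longrightarrow> xmn \<X> n (rowm (trunc \<xi> N)) \<le> Bd"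
    using row_bound[OF xi rc] by blast
  have tm: "\<And>N j. trunc \<xi> N j \<in> xcar \<X>" by (rule trunc_mem[OF xi])
  have Bd0: "0 \<le> Bd" using Bd[of 1 0] rowX_nonneg[of 1 "trunc \<xi> 0"] tm by force
  show ?thesis
  proof (intro exI[of _ "Bd * Bd"] allI impI)
    fix k n :: nat and a assume k: "k \<ge> 1" and ma: "matin (acar \<A>) k a" and n: "n \<ge> 1"
    define K where "K = k * n"
    have K: "K \<ge> 1" unfolding K_def using k n by simp
    define X0 where "X0 = rowm (trunc \<xi> n)"
    define x where "x = bdiag k n X0"
    have mX0: "matin (xcar \<X>) n X0" unfolding X0_def by (rule mrow) (rule tm)
    from bdiag_norm[OF osX n mX0 k] have xn: "xmn \<X> K x = xmn \<X> n X0" and mx: "matin (xcar \<X>) K x"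
      unfolding x_def K_def by auto
    have xB: "xmn \<X> K x \<le> Bd" unfolding xn X0_def by (rule Bd[OF n])
    have x0: "0 \<le> xmn \<X> K x" by (rule os_nonneg[OF osX K mx])
    have xe: "x t r = (if t < K \<and> r < K \<and> t = r div n * n then \<xi> (r mod n) else 0)" for t r
      unfolding x_def X0_def K_def by (rule bd_entry[OF n])
    define A' where "A' = (\<lambda>u v. if (u < K \<and> u mod n = 0) \<and> (v < K \<and> v mod n = 0) then a (u div n) (v div n) else 0)"
    have mA': "matin (acar \<A>) K A'"
      unfolding matin_def A'_def using ma os_0[OF osA] divlt[of _ k n] unfolding K_def matin_def by auto
    have A'n: "amn \<A> K A' \<le> amn \<A> k a"
      unfolding A'_def
    proof (rule compress[OF osA ascA0 ascA1 K k ma])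
      show "\<And>i. i < K \<Longrightarrow> i < K \<and> i mod n = 0 \<Longrightarrow> i div n < k" using divlt[of _ k n] unfolding K_def by auto
      show "\<And>i. i < K \<Longrightarrow> i < K \<and> i mod n = 0 \<Longrightarrow> i div n < k" using divlt[of _ k n] unfolding K_def by auto
      show "\<And>i i'. i < K \<Longrightarrow> i' < K \<Longrightarrow> i < K \<and> i mod n = 0 \<Longrightarrow> i' < K \<and> i' mod n = 0 \<Longrightarrow> i div n = i' div n \<Longrightarrow> i = i'"
        by (metis div_mult_mod_eq)
      show "\<And>i i'. i < K \<Longrightarrow> i' < K \<Longrightarrow> i < K \<and> i mod n = 0 \<Longrightarrow> i' < K \<and> i' mod n = 0 \<Longrightarrow> i div n = i' div n \<Longrightarrow> i = i'"
        by (metis div_mult_mod_eq)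
    qed
    have A'0: "0 \<le> amn \<A> K A'" by (rule os_nonneg[OF osA K mA'])
    define y where "y = (\<lambda>r s. \<Sum>t<K. lact \<X> (A' r t) (x t s))"
    have my: "matin (xcar \<X>) K y"
      unfolding matin_def y_def
    proof (intro allI impI xsum_mem)
      fix r s t assume "r < K" "s < K" "t \<in> {..<K}"
      thus "lact \<X> (A' r t) (x t s) \<in> xcar \<X>"
        using mA' mx lact_car_all unfolding matin_def by auto
    qed simp
    have yn: "xmn \<X> K y \<le> amn \<A> K A' * xmn \<X> K x"
      unfolding y_def using lcc_all K mA' mx by blast
    have divK: "r div n * n < K" if "r < K" for r
    proof -
      have "r div n < k" using divlt[of r k n] that unfolding K_def by simp
      hence "r div n * n + n \<le> k * n" by (metis add_mult_distrib less_eq_Suc_le mult_Suc mult_le_mono1 add.commute)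
      thus ?thesis unfolding K_def using n by linarith
    qed
    have ye: "y (r div n * n) s = lact \<X> (a (r div n) (s div n)) (\<xi> (s mod n))" if r: "r < K" and s: "s < K" for r s
    proof -
      have "y (r div n * n) s = lact \<X> (A' (r div n * n) (s div n * n)) (x (s div n * n) s)"
        unfolding y_def
        by (rule sum_single) (use divK[OF s] in \<open>auto simp: xe lact_x0\<close>)
      also have "\<dots> = lact \<X> (a (r div n) (s div n)) (\<xi> (s mod n))"
        using divK[OF r] divK[OF s] s n by (simp add: A'_def xe)
      finally show ?thesis .
    qed
    have "amn \<B> (k * n) (blk k n (\<lambda>p q i j. ipr \<X> (\<xi> i) (lact \<X> (a p q) (\<xi> j))))
        = amn \<B> K (\<lambda>i j. \<Sum>t<K. ipr \<X> (x t i) (y t j))"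
      unfolding K_def[symmetric]
    proof (rule os_cong[OF osB])
      fix r s assume r: "r < K" and s: "s < K"
      have "(\<Sum>t<K. ipr \<X> (x t r) (y t s)) = ipr \<X> (x (r div n * n) r) (y (r div n * n) s)"
        by (rule sum_single) (use divK[OF r] in \<open>auto simp: xe ipr_0x\<close>)
      also have "\<dots> = ipr \<X> (\<xi> (r mod n)) (lact \<X> (a (r div n) (s div n)) (\<xi> (s mod n)))"
        using ye[OF r s] divK[OF r] r by (simp add: xe)
      finally show "blk k n (\<lambda>p q i j. ipr \<X> (\<xi> i) (lact \<X> (a p q) (\<xi> j))) r s = (\<Sum>t<K. ipr \<X> (x t r) (y t s))"
        using r s unfolding blk_def K_def by simp
    qed
    also have "\<dots> \<le> xmn \<X> K x * xmn \<X> K y"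
      using pcc_all K mx my by blast
    also have "\<dots> \<le> Bd * (amn \<A> k a * Bd)"
    proof (rule mult_mono[OF xB _ Bd0])
      have "xmn \<X> K y \<le> amn \<A> K A' * xmn \<X> K x" by (rule yn)
      also have "\<dots> \<le> amn \<A> k a * Bd" by (rule mult_mono[OF A'n xB os_nonneg[OF osA k ma] x0])
      finally show "xmn \<X> K y \<le> amn \<A> k a * Bd" .
      show "0 \<le> xmn \<X> K y" by (rule os_nonneg[OF osX K my])
    qed
    also have "\<dots> = Bd * Bd * amn \<A> k a" by simp
    finally show "amn \<B> (k * n) (blk k n (\<lambda>p q i j. ipr \<X> (\<xi> i) (lact \<X> (a p q) (\<xi> j)))) \<le> Bd * Bd * amn \<A> k a" .
  qed
qed

end


lemma geo: "(\<Sum>j<s. if N0 \<le> j then (1/2::real)^j else 0) = (if N0 \<le> s then 2*(1/2)^N0 - 2*(1/2)^s else 0)"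
proof (induction s)
  case 0 thus ?case by simp
next
  case (Suc s)
  show ?case
  proof (cases "N0 \<le> s")
    case True thus ?thesis using Suc by simp
  next
    case False
    thus ?thesis using Suc by (cases "N0 = Suc s") auto
  qed
qed

lemma geo_le: "(\<Sum>j<s. if N0 \<le> j then (1/2::real)^j else 0) \<le> 2*(1/2)^N0"
  unfolding geo by simp

lemma cspan_mono: "S \<subseteq> T \<Longrightarrow> cspan sc S \<subseteq> cspan sc T"
  unfolding cspan_def by blast

context corr begin

lemma part3:
  assumes xi: "\<And>n. \<xi> n \<in> xcar \<X>"
    and dense: "closure (cspan (xsc \<X>) {ract \<X> (\<xi> n) b | n b. b \<in> acar \<B>}) = UNIV"
    and rc: "row_cauchy \<X> \<xi>"
  shows "diff_gen_seq \<A> \<B> \<X> \<xi>"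
  unfolding diff_gen_seq_def
proof (intro conjI ballI allI)
  have "closure (cspan (xsc \<X>) {ract \<X> (\<xi> n) b | n b. b \<in> acar \<B>}) \<subseteq> closure (cspan (xsc \<X>) {ract \<X> (\<xi> n) b | n b. True})"
    by (intro closure_mono cspan_mono) blast
  thus "closure (cspan (xsc \<X>) {ract \<X> (\<xi> n) b | n b. True}) = UNIV" using dense by blast
  fix a l n m assume a: "a \<in> acar \<A>"
  have "lact \<X> a (\<xi> m) + xsc \<X> l (\<xi> m) \<in> xcar \<X>"
    using lact_car_all a xi os_scm[OF osX] os_add[OF osX] by blast
  thus "ipr \<X> (\<xi> n) (lact \<X> a (\<xi> m) + xsc \<X> l (\<xi> m)) \<in> acar \<B>" using ipr_car_all xi by blast
next
  fix a l assume a: "a \<in> acar \<A>"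
  show "KB_cauchy \<B> (\<lambda>n m. ipr \<X> (\<xi> n) (lact \<X> a (\<xi> m) + xsc \<X> l (\<xi> m)))"
    by (rule KB_part[OF xi rc a])
next
  show "\<exists>C. \<forall>k\<ge>1. \<forall>a. matin (acar \<A>) k a \<longrightarrow> (\<forall>n\<ge>1.
        amn \<B> (k * n) (blk k n (\<lambda>p q i j. ipr \<X> (\<xi> i) (lact \<X> (a p q) (\<xi> j)))) \<le> C * amn \<A> k a)"
    by (rule cb_part[OF xi rc])
qed

lemma ract_bound: "norm (ract \<X> x b) \<le> sqrt (norm (ast \<B> b) * norm b) * norm x"
proof -
  have h: "ast \<B> (ipr \<X> x x) = ipr \<X> x x" using ipr_sym_all by metis
  have "ipr \<X> (ract \<X> x b) (ract \<X> x b) = ipr \<X> (ract \<X> x b) x * b" using ipr_ract_all by blast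
  also have "ipr \<X> (ract \<X> x b) x = ast \<B> (ipr \<X> x (ract \<X> x b))" using ipr_sym_all by blast
  also have "\<dots> = ast \<B> b * ipr \<X> x x" using ipr_ract_all astB_mult h by metis
  finally have e: "ipr \<X> (ract \<X> x b) (ract \<X> x b) = ast \<B> b * ipr \<X> x x * b" .
  have nx: "norm (ipr \<X> x x) = (norm x)\<^sup>2"
    using norm_all by (metis norm_ge_zero real_sqrt_pow2)
  have "norm (ract \<X> x b) = sqrt (norm (ast \<B> b * ipr \<X> x x * b))" using norm_all e by metis
  also have "\<dots> \<le> sqrt (norm (ast \<B> b) * norm b * (norm x)\<^sup>2)"
  proof (rule real_sqrt_le_mono)
    have "norm (ast \<B> b * ipr \<X> x x * b) \<le> norm (ast \<B> b * ipr \<X> x x) * norm b" by (rule norm_mult_ineq)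
    also have "\<dots> \<le> norm (ast \<B> b) * norm (ipr \<X> x x) * norm b"
      by (rule mult_right_mono[OF norm_mult_ineq]) simp
    finally show "norm (ast \<B> b * ipr \<X> x x * b) \<le> norm (ast \<B> b) * norm b * (norm x)\<^sup>2"
      by (simp add: nx algebra_simps)
  qed
  also have "\<dots> = sqrt (norm (ast \<B> b) * norm b) * norm x"
    by (simp add: real_sqrt_mult)
  finally show ?thesis .
qed

end


context corr begin

lemma xsc_addsc_all: "\<forall>c d x. xsc \<X> (c + d) x = xsc \<X> c x + xsc \<X> d x"
  using HC unfolding cstar_corr_def by (elim conjE) assumption

lemma lev1_0: "lev1 (xmn \<X>) 0 = 0"
  unfolding lev1_def by (rule os_zero_mat[OF osX]) simp

lemma lev1_sc: "x \<in> xcar \<X> \<Longrightarrow> lev1 (xmn \<X>) (xsc \<X> c x) = cmod c * lev1 (xmn \<X>) x"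
  unfolding lev1_def using os_scal[OF osX, of 1 "\<lambda>_ _. x" c] by (simp add: matin_def)

lemma lev1_neg: "x \<in> xcar \<X> \<Longrightarrow> lev1 (xmn \<X>) (- x) = lev1 (xmn \<X>) x"
  using lev1_sc[of x "-1"] by (simp add: xscm1)

lemma cspan_0: "0 \<in> cspan (xsc \<X>) S"
  unfolding cspan_def by (rule CollectI, rule exI[of _ "{}"]) simp

lemma cspan_add:
  assumes "x \<in> cspan (xsc \<X>) S" "y \<in> cspan (xsc \<X>) S"
  shows "x + y \<in> cspan (xsc \<X>) S"
proof -
  obtain F c where F: "finite F" "F \<subseteq> S" "x = (\<Sum>s\<in>F. xsc \<X> (c s) s)" using assms(1) unfolding cspan_def by blast
  obtain G d where G: "finite G" "G \<subseteq> S" "y = (\<Sum>s\<in>G. xsc \<X> (d s) s)" using assms(2) unfolding cspan_def by blast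
  define e where "e s = (if s \<in> F then c s else 0) + (if s \<in> G then d s else 0)" for s
  have 1: "(\<Sum>s\<in>F \<union> G. xsc \<X> (if s \<in> F then c s else 0) s) = x"
  proof -
    have "(\<Sum>s\<in>F \<union> G. xsc \<X> (if s \<in> F then c s else 0) s) = (\<Sum>s\<in>F. xsc \<X> (if s \<in> F then c s else 0) s)"
      by (rule sum.mono_neutral_right) (use F G in \<open>auto simp: xsc0\<close>)
    thus ?thesis using F by simp
  qed
  have 2: "(\<Sum>s\<in>F \<union> G. xsc \<X> (if s \<in> G then d s else 0) s) = y"
  proof -
    have "(\<Sum>s\<in>F \<union> G. xsc \<X> (if s \<in> G then d s else 0) s) = (\<Sum>s\<in>G. xsc \<X> (if s \<in> G then d s else 0) s)"
      by (rule sum.mono_neutral_right) (use F G in \<open>auto simp: xsc0\<close>)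
    thus ?thesis using G by simp
  qed
  have "(\<Sum>s\<in>F \<union> G. xsc \<X> (e s) s) = x + y"
    unfolding e_def xsc_addsc_all[rule_format] sum.distrib 1 2 ..
  thus ?thesis unfolding cspan_def
    by (intro CollectI exI[of _ "F \<union> G"] exI[of _ e]) (use F G in auto)
qed

lemma closure_add:
  assumes A: "\<And>x y. x \<in> A \<Longrightarrow> y \<in> A \<Longrightarrow> x + y \<in> A"
    and x: "x \<in> closure A" and y: "(y::'x) \<in> closure A"
  shows "x + y \<in> closure A"
  unfolding closure_approachable
proof (intro allI impI)
  fix e :: real assume e: "e > 0"
  obtain x' where x': "x' \<in> A" "dist x' x < e/2" using x e unfolding closure_approachable by (meson half_gt_zero)
  obtain y' where y': "y' \<in> A" "dist y' y < e/2" using y e unfolding closure_approachable by (meson half_gt_zero)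
  have "dist (x' + y') (x + y) \<le> dist x' x + dist y' y" by (rule dist_triangle_add)
  thus "\<exists>z\<in>A. dist z (x + y) < e" using A[OF x'(1) y'(1)] x' y' by (intro bexI[of _ "x'+y'"]) auto
qed

lemma part1:
  assumes cg: "countably_generated \<B> \<X>"
  shows "\<exists>\<xi>. (\<forall>n. \<xi> n \<in> xcar \<X>) \<and>
            closure (cspan (xsc \<X>) {ract \<X> (\<xi> n) b | n b. b \<in> acar \<B>}) = UNIV \<and>
            row_cauchy \<X> \<xi>"
proof -
  have "\<exists>\<eta>::nat\<Rightarrow>'x. closure (cspan (xsc \<X>) {ract \<X> (\<eta> n) b | n b. b \<in> acar \<B>}) = UNIV"
    using cg unfolding countably_generated_def .
  then obtain \<eta> :: "nat \<Rightarrow> 'x" where eta: "closure (cspan (xsc \<X>) {ract \<X> (\<eta> n) b | n b. b \<in> acar \<B>}) = UNIV"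
    by (rule exE)
  have "\<forall>k. \<exists>z. z \<in> xcar \<X> \<and> dist z (\<eta> (fst (prod_decode k))) < 1 / real (Suc (snd (prod_decode k)))"
  proof
    fix k
    have "\<eta> (fst (prod_decode k)) \<in> closure (xcar \<X>)" using closX by simp
    thus "\<exists>z. z \<in> xcar \<X> \<and> dist z (\<eta> (fst (prod_decode k))) < 1 / real (Suc (snd (prod_decode k)))"
      unfolding closure_approachable by (metis of_nat_0_less_iff zero_less_Suc zero_less_divide_1_iff)
  qed
  then obtain \<zeta> where \<zeta>: "\<And>k. \<zeta> k \<in> xcar \<X>"
    "\<And>k. dist (\<zeta> k) (\<eta> (fst (prod_decode k))) < 1 / real (Suc (snd (prod_decode k)))" by metis
  define L where "L k = lev1 (xmn \<X>) (\<zeta> k)" for k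
  have L0: "0 \<le> L k" for k unfolding L_def by (rule lev1X_nonneg[OF \<zeta>(1)])
  define c where "c k = 1 / (2^k * (1 + L k))" for k
  have c0: "0 < c k" for k unfolding c_def using L0[of k] by (simp add: add_nonneg_pos)
  define \<xi> where "\<xi> k = c k *\<^sub>R \<zeta> k" for k
  have xr: "\<xi> k = xsc \<X> (complex_of_real (c k)) (\<zeta> k)" for k unfolding \<xi>_def using xsc_real by simp
  have xim: "\<xi> k \<in> xcar \<X>" for k unfolding xr by (rule os_scm[OF osX \<zeta>(1)])
  have lv: "lev1 (xmn \<X>) (\<xi> k) \<le> (1/2)^k" for k
  proof -
    have "lev1 (xmn \<X>) (\<xi> k) = c k * L k" unfolding xr L_def using c0[of k]
      by (simp add: lev1_sc[OF \<zeta>(1)])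
    also have "\<dots> = (L k / (1 + L k)) * (1/2)^k" unfolding c_def by (simp add: power_one_over field_simps)
    also have "\<dots> \<le> 1 * (1/2)^k" by (rule mult_right_mono) (use L0[of k] in auto)
    finally show ?thesis by simp
  qed
  have tm: "\<And>N j. trunc \<xi> N j \<in> xcar \<X>" by (rule trunc_mem[OF xim])
  have rc: "row_cauchy \<X> \<xi>"
    unfolding row_cauchy_def
  proof (intro allI impI)
    fix \<epsilon> :: real assume e: "\<epsilon> > 0"
    obtain N0 where N0: "(1/2::real)^N0 < \<epsilon>/2" using real_arch_pow_inv[of "\<epsilon>/2" "1/2"] e by auto
    have "xmn \<X> (Suc (max N N')) (rowm (\<lambda>j. trunc \<xi> N j - trunc \<xi> N' j)) < \<epsilon>" if NN: "N \<ge> N0" "N' \<ge> N0" for N N'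
    proof -
      have "xmn \<X> (Suc (max N N')) (rowm (\<lambda>j. trunc \<xi> N j - trunc \<xi> N' j))
          \<le> (\<Sum>j<Suc (max N N'). lev1 (xmn \<X>) (trunc \<xi> N j - trunc \<xi> N' j))"
        by (rule rowsum[OF osX xsc0 xsc1]) (auto intro: xcar_diff tm)
      also have "\<dots> \<le> (\<Sum>j<Suc (max N N'). if N0 \<le> j then (1/2::real)^j else 0)"
      proof (rule sum_mono)
        fix j
        show "lev1 (xmn \<X>) (trunc \<xi> N j - trunc \<xi> N' j) \<le> (if N0 \<le> j then (1/2::real)^j else 0)"
          using NN lv[of j] by (cases "j < N"; cases "j < N'") (auto simp: trunc_def lev1_0 lev1_neg xim)
      qed
      also have "\<dots> \<le> 2 * (1/2)^N0" by (rule geo_le)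
      also have "\<dots> < \<epsilon>" using N0 by simp
      finally show ?thesis .
    qed
    thus "\<exists>N0. \<forall>N\<ge>N0. \<forall>N'\<ge>N0. xmn \<X> (Suc (max N N'))
        (\<lambda>i j. if i = 0 then (if j < N then \<xi> j else 0) - (if j < N' then \<xi> j else 0) else 0) < \<epsilon>"
      unfolding rowm_def trunc_def by blast
  qed
  define S where "S = {ract \<X> (\<xi> n) b | n b. b \<in> acar \<B>}"
  define T where "T = {ract \<X> (\<eta> n) b | n b. b \<in> acar \<B>}"
  define C where "C = closure (cspan (xsc \<X>) S)"
  have Cadd: "x + y \<in> C" if "x \<in> C" "y \<in> C" for x y
    unfolding C_def by (rule closure_add[OF cspan_add]) (use that in \<open>auto simp: C_def\<close>)
  have C0: "0 \<in> C" unfolding C_def using cspan_0 closure_subset by blast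
  have TC: "t \<in> C" if tT: "t \<in> T" for t
  proof -
    obtain n b where t: "t = ract \<X> (\<eta> n) b" and b: "b \<in> acar \<B>" using tT unfolding T_def by blast
    define Kb where "Kb = sqrt (norm (ast \<B> b) * norm b) + 1"
    have Kb: "Kb > 0" unfolding Kb_def by (simp add: add_nonneg_pos)
    show ?thesis unfolding C_def closure_approachable
    proof (intro allI impI)
      fix e :: real assume e: "e > 0"
      obtain m where m: "inverse (real (Suc m)) < e / Kb" using reals_Archimedean[of "e/Kb"] e Kb by auto
      define k where "k = prod_encode (n, m)"
      have pk: "prod_decode k = (n, m)" unfolding k_def by simp
      have dz: "dist (\<zeta> k) (\<eta> n) < 1 / real (Suc m)" using \<zeta>(2)[of k] pk by simp
      have ck: "c k \<noteq> 0" using c0[of k] by simp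
      have zx: "\<zeta> k = xsc \<X> (complex_of_real (1 / c k)) (\<xi> k)"
      proof -
        have "xsc \<X> (complex_of_real (1 / c k)) (\<xi> k) = (1 / c k) *\<^sub>R \<xi> k" using xsc_real by blast
        thus ?thesis unfolding \<xi>_def using ck by simp
      qed
      have "ract \<X> (\<zeta> k) b = (\<Sum>s\<in>{ract \<X> (\<xi> k) b}. xsc \<X> ((\<lambda>_. complex_of_real (1 / c k)) s) s)"
        unfolding zx using ract_sc_all by simp
      hence inS: "ract \<X> (\<zeta> k) b \<in> cspan (xsc \<X>) S" unfolding cspan_def S_def using b
        by (intro CollectI exI[of _ "{ract \<X> (\<xi> k) b}"] exI[of _ "\<lambda>_. complex_of_real (1 / c k)"]) auto
      have "dist (ract \<X> (\<zeta> k) b) t = norm (ract \<X> (\<zeta> k - \<eta> n) b)"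
        unfolding t dist_norm ract_diff ..
      also have "\<dots> \<le> sqrt (norm (ast \<B> b) * norm b) * norm (\<zeta> k - \<eta> n)" by (rule ract_bound)
      also have "\<dots> \<le> Kb * norm (\<zeta> k - \<eta> n)" unfolding Kb_def by (rule mult_right_mono) auto
      also have "\<dots> \<le> Kb * (1 / real (Suc m))" using dz Kb unfolding dist_norm by (intro mult_left_mono) auto
      also have "\<dots> < e" using m Kb by (simp add: field_simps)
      finally show "\<exists>y\<in>cspan (xsc \<X>) S. dist y t < e" using inS by blast
    qed
  qed
  have Tsc: "xsc \<X> a t \<in> T" if tT: "t \<in> T" for a t
  proof -
    obtain n b where t: "t = ract \<X> (\<eta> n) b" and b: "b \<in> acar \<B>" using tT unfolding T_def by blast
    have "xsc \<X> a t = ract \<X> (\<eta> n) (asc \<B> a b)" unfolding t using ract_sc_all by simp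
    moreover have "asc \<B> a b \<in> acar \<B>" by (rule os_scm[OF osB b])
    ultimately show ?thesis unfolding T_def by blast
  qed
  have "cspan (xsc \<X>) T \<subseteq> C"
  proof
    fix x assume "x \<in> cspan (xsc \<X>) T"
    then obtain F d where F: "finite F" "F \<subseteq> T" "x = (\<Sum>s\<in>F. xsc \<X> (d s) s)" unfolding cspan_def by blast
    have "(\<Sum>s\<in>G. xsc \<X> (d s) s) \<in> C" if "finite G" "G \<subseteq> T" for G
      using that
    proof (induction G rule: finite_induct)
      case empty thus ?case using C0 by simp
    next
      case (insert s G)
      have "xsc \<X> (d s) s \<in> C" using insert.prems by (intro TC Tsc) auto
      moreover have "(\<Sum>s\<in>G. xsc \<X> (d s) s) \<in> C" using insert by auto
      ultimately show ?case using insert.hyps by (simp add: Cadd)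
    qed
    thus "x \<in> C" using F by simp
  qed
  hence "closure (cspan (xsc \<X>) T) \<subseteq> C" unfolding C_def by (rule closure_minimal) simp
  hence dense: "closure (cspan (xsc \<X>) S) = UNIV" using eta unfolding T_def C_def by blast
  show ?thesis using xim dense rc unfolding S_def by blast
qed

end


theorem mainTheorem15:
  fixes \<A> :: "'a::{real_normed_algebra,banach} opalg"
    and \<B> :: "'b::{real_normed_algebra,banach} opalg"
    and \<X> :: "('a, 'b, 'x::{real_normed_vector,banach}) opcorr"
  assumes "op_star_corr \<A> \<B> \<X>"
    and "countably_generated \<B> \<X>"
  shows "(\<exists>\<xi>. (\<forall>n. \<xi> n \<in> xcar \<X>) \<and>
            closure (cspan (xsc \<X>) {ract \<X> (\<xi> n) b | n b. b \<in> acar \<B>}) = UNIV \<and>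
            row_cauchy \<X> \<xi>)
       \<and> differentiable_corr \<A> \<B> \<X>
       \<and> (\<forall>\<xi>. (\<forall>n. \<xi> n \<in> xcar \<X>) \<and>
              closure (cspan (xsc \<X>) {ract \<X> (\<xi> n) b | n b. b \<in> acar \<B>}) = UNIV \<and>
              row_cauchy \<X> \<xi> \<longrightarrow> diff_gen_seq \<A> \<B> \<X> \<xi>)"
proof -
  have C: "corr \<A> \<B> \<X>" by (rule corr.intro) (rule assms(1))
  have p1: "\<exists>\<xi>. (\<forall>n. \<xi> n \<in> xcar \<X>) \<and>
            closure (cspan (xsc \<X>) {ract \<X> (\<xi> n) b | n b. b \<in> acar \<B>}) = UNIV \<and>
            row_cauchy \<X> \<xi>" by (rule corr.part1[OF C assms(2)])
  have p3: "\<forall>\<xi>. (\<forall>n. \<xi> n \<in> xcar \<X>) \<and>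
              closure (cspan (xsc \<X>) {ract \<X> (\<xi> n) b | n b. b \<in> acar \<B>}) = UNIV \<and>
              row_cauchy \<X> \<xi> \<longrightarrow> diff_gen_seq \<A> \<B> \<X> \<xi>"
    using corr.part3[OF C] by blast
  have p2: "differentiable_corr \<A> \<B> \<X>"
    using p1 p3 unfolding differentiable_corr_def by blast
  show ?thesis using p1 p2 p3 by blast
qed

end
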